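(* Let $N$ be a lattice of rank $n$, let $\sigma\subseteq N_\mathbb{Q}$ be a strongly convex rational polyhedral cone having a $k$-dimensional regular face $\tau$, and let $G_{\bar\chi}=\mathbb{G}_a^k\rtimes T$ be any group as below with $\dim T=n-k$. Then there exists a monoid structure on $X_\sigma$ whose group of invertible elements is isomorphic to $G_{\bar\chi}$.
   Context: $\mathbb{K}$ algebraically closed of characteristic zero. $M$ is the dual lattice, $S_\sigma=\sigma^\vee\cap M$, $X_\sigma=\operatorname{Spec}\bigoplus_{u\in S_\sigma}\mathbb{K}\chi^u$ is the associated affine toric variety. A face is regular if the primitive vectors on its rays are part of a basis of $N$. For a torus $T$ and characters $\chi_1,\ldots,\chi_k$ of $T$, $G_{\bar\chi}=\mathbb{G}_a^k\rtimes T$ is the algebraic group with multiplication $(\bar\alpha,t)(\bar\alpha',t')=(\bar\alpha+(\chi_1(t)\alpha'_1,\ldots,\chi_k(t)\alpha'_k),tt')$. A monoid structure on a variety $X$ is an associative morphism $X\times X\to X$ with a neutral element. *)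

theory Defs
  imports "HOL-Computational_Algebra.Polynomial"
begin

definition alg_closed :: "'a::field itself \<Rightarrow> bool" where
  "alg_closed _ = (\<forall>p::'a poly. degree p > 0 \<longrightarrow> (\<exists>x. poly p x = 0))"

(* The lattice N = M = Z^n, vectors as nat-indexed functions vanishing at indices \<ge> n *)
definition lat :: "nat \<Rightarrow> (nat \<Rightarrow> int) set" where
  "lat n = {v. \<forall>i\<ge>n. v i = 0}"

definition qcone :: "(nat \<Rightarrow> int) set \<Rightarrow> (nat \<Rightarrow> rat) set" where
  "qcone V = {x. \<exists>l. (\<forall>v\<in>V. l v \<ge> 0) \<and> x = (\<lambda>i. \<Sum>v\<in>V. l v * of_int (v i))}"

definition strongly_convex :: "(nat \<Rightarrow> rat) set \<Rightarrow> bool" where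
  "strongly_convex C = (\<forall>x. x \<in> C \<and> (\<lambda>i. - x i) \<in> C \<longrightarrow> x = (\<lambda>i. 0))"

(* S_sigma = sigma^vee \<inter> M for sigma = qcone V *)
definition dual_monoid :: "nat \<Rightarrow> (nat \<Rightarrow> int) set \<Rightarrow> (nat \<Rightarrow> int) set" where
  "dual_monoid n V = {u \<in> lat n. \<forall>v\<in>V. 0 \<le> (\<Sum>i<n. u i * v i)}"

definition is_face :: "nat \<Rightarrow> (nat \<Rightarrow> rat) set \<Rightarrow> (nat \<Rightarrow> rat) set \<Rightarrow> bool" where
  "is_face n C F = (\<exists>u::nat \<Rightarrow> rat. (\<forall>x\<in>C. 0 \<le> (\<Sum>i<n. u i * x i))
       \<and> F = {x \<in> C. (\<Sum>i<n. u i * x i) = 0})"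

definition zbasis :: "nat \<Rightarrow> (nat \<Rightarrow> nat \<Rightarrow> int) \<Rightarrow> bool" where
  "zbasis n B = ((\<forall>i<n. B i \<in> lat n)
     \<and> (\<forall>w\<in>lat n. \<exists>c. w = (\<lambda>j. \<Sum>i<n. c i * B i j))
     \<and> (\<forall>c. (\<lambda>j. \<Sum>i<n. c i * B i j) = (\<lambda>j. 0) \<longrightarrow> (\<forall>i<n. c i = 0)))"

definition regular_face :: "nat \<Rightarrow> (nat \<Rightarrow> rat) set \<Rightarrow> nat \<Rightarrow> bool" where
  "regular_face n F k = (k \<le> n \<and> (\<exists>B. zbasis n B \<and> F = qcone (B ` {..<k})))"

(* K-points of X_sigma = Spec K[S]: monoid homomorphisms S \<rightarrow> multiplicative K, extended by 0 off S *)
definition toric_pts :: "(nat \<Rightarrow> int) set \<Rightarrow> ((nat \<Rightarrow> int) \<Rightarrow> 'K::field) set" where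
  "toric_pts S = {x. x (\<lambda>_. 0) = 1 \<and> (\<forall>u\<in>S. \<forall>w\<in>S. x (\<lambda>i. u i + w i) = x u * x w)
                    \<and> (\<forall>u. u \<notin> S \<longrightarrow> x u = 0)}"

(* regular functions on X_sigma: K-linear combinations of characters chi^u, u \<in> S *)
definition toric_regular :: "(nat \<Rightarrow> int) set \<Rightarrow> (((nat \<Rightarrow> int) \<Rightarrow> 'K::field) \<Rightarrow> 'K) \<Rightarrow> bool" where
  "toric_regular S f = (\<exists>F c. finite F \<and> F \<subseteq> S \<and>
      (\<forall>x\<in>toric_pts S. f x = (\<Sum>u\<in>F. c u * x u)))"

definition toric_regular2 :: "(nat \<Rightarrow> int) set \<Rightarrow>
     (((nat \<Rightarrow> int) \<Rightarrow> 'K::field) \<Rightarrow> ((nat \<Rightarrow> int) \<Rightarrow> 'K) \<Rightarrow> 'K) \<Rightarrow> bool" where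
  "toric_regular2 S f = (\<exists>F c. finite F \<and> F \<subseteq> S \<times> S \<and>
      (\<forall>x\<in>toric_pts S. \<forall>y\<in>toric_pts S. f x y = (\<Sum>(u,w)\<in>F. c (u,w) * x u * y w)))"

definition monoid_structure :: "(nat \<Rightarrow> int) set \<Rightarrow>
     (((nat \<Rightarrow> int) \<Rightarrow> 'K::field) \<Rightarrow> ((nat \<Rightarrow> int) \<Rightarrow> 'K) \<Rightarrow> ((nat \<Rightarrow> int) \<Rightarrow> 'K))
     \<Rightarrow> ((nat \<Rightarrow> int) \<Rightarrow> 'K) \<Rightarrow> bool" where
  "monoid_structure S mu e = (e \<in> toric_pts S
     \<and> (\<forall>x\<in>toric_pts S. \<forall>y\<in>toric_pts S. mu x y \<in> toric_pts S)
     \<and> (\<forall>u\<in>S. toric_regular2 S (\<lambda>x y. mu x y u))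
     \<and> (\<forall>x\<in>toric_pts S. \<forall>y\<in>toric_pts S. \<forall>z\<in>toric_pts S. mu (mu x y) z = mu x (mu y z))
     \<and> (\<forall>x\<in>toric_pts S. mu e x = x \<and> mu x e = x))"

definition monoid_units :: "(nat \<Rightarrow> int) set \<Rightarrow>
     (((nat \<Rightarrow> int) \<Rightarrow> 'K::field) \<Rightarrow> ((nat \<Rightarrow> int) \<Rightarrow> 'K) \<Rightarrow> ((nat \<Rightarrow> int) \<Rightarrow> 'K))
     \<Rightarrow> ((nat \<Rightarrow> int) \<Rightarrow> 'K) \<Rightarrow> ((nat \<Rightarrow> int) \<Rightarrow> 'K) set" where
  "monoid_units S mu e = {x \<in> toric_pts S. \<exists>y\<in>toric_pts S. mu x y = e \<and> mu y x = e}"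

(* functions on a subset G of X_sigma that are locally (on basic opens) quotients of
   regular functions, i.e. regular functions on the subvariety G *)
definition loc_regular :: "(nat \<Rightarrow> int) set \<Rightarrow> ((nat \<Rightarrow> int) \<Rightarrow> 'K::field) set
     \<Rightarrow> (((nat \<Rightarrow> int) \<Rightarrow> 'K) \<Rightarrow> 'K) \<Rightarrow> bool" where
  "loc_regular S G f = (\<forall>p\<in>G. \<exists>g h. toric_regular S g \<and> toric_regular S h \<and> h p \<noteq> 0 \<and>
      (\<forall>q\<in>G. h q \<noteq> 0 \<longrightarrow> f q * h q = g q))"

(* K-points of G_chi = G_a^k \<rtimes> T, T = (G_m)^m; pairs (a,t), canonical zero padding *)
definition gchi_pts :: "nat \<Rightarrow> nat \<Rightarrow> ((nat \<Rightarrow> 'K::field) \<times> (nat \<Rightarrow> 'K)) set" where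
  "gchi_pts k m = {(a,t). (\<forall>i\<ge>k. a i = 0) \<and> (\<forall>j<m. t j \<noteq> 0) \<and> (\<forall>j\<ge>m. t j = 0)}"

definition chr :: "nat \<Rightarrow> (nat \<Rightarrow> int) \<Rightarrow> (nat \<Rightarrow> 'K::field) \<Rightarrow> 'K" where
  "chr m c t = (\<Prod>j<m. t j powi c j)"

definition gchi_mult :: "nat \<Rightarrow> nat \<Rightarrow> (nat \<Rightarrow> nat \<Rightarrow> int) \<Rightarrow>
     (nat \<Rightarrow> 'K::field) \<times> (nat \<Rightarrow> 'K) \<Rightarrow> (nat \<Rightarrow> 'K) \<times> (nat \<Rightarrow> 'K) \<Rightarrow> (nat \<Rightarrow> 'K) \<times> (nat \<Rightarrow> 'K)" where
  "gchi_mult k m chi g h = (case g of (a,t) \<Rightarrow> case h of (a',t') \<Rightarrow>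
     ((\<lambda>i. if i < k then a i + chr m (chi i) t * a' i else 0),
      (\<lambda>j. if j < m then t j * t' j else 0)))"

(* regular functions on G_chi = A^k \<times> (G_m)^m : polynomial in a, Laurent polynomial in t *)
definition gchi_regular :: "nat \<Rightarrow> nat \<Rightarrow> ((nat \<Rightarrow> 'K::field) \<times> (nat \<Rightarrow> 'K) \<Rightarrow> 'K) \<Rightarrow> bool" where
  "gchi_regular k m f = (\<exists>F c. finite F \<and>
      F \<subseteq> {(p::nat \<Rightarrow> nat, q::nat \<Rightarrow> int). (\<forall>i\<ge>k. p i = 0) \<and> (\<forall>j\<ge>m. q j = 0)} \<and>
      (\<forall>(a,t)\<in>gchi_pts k m. f (a,t) =
          (\<Sum>(p,q)\<in>F. c (p,q) * (\<Prod>i<k. a i ^ p i) * (\<Prod>j<m. t j powi q j))))"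

definition units_iso_gchi :: "(nat \<Rightarrow> int) set \<Rightarrow>
     (((nat \<Rightarrow> int) \<Rightarrow> 'K::field) \<Rightarrow> ((nat \<Rightarrow> int) \<Rightarrow> 'K) \<Rightarrow> ((nat \<Rightarrow> int) \<Rightarrow> 'K))
     \<Rightarrow> ((nat \<Rightarrow> int) \<Rightarrow> 'K) \<Rightarrow> nat \<Rightarrow> nat \<Rightarrow> (nat \<Rightarrow> nat \<Rightarrow> int) \<Rightarrow> bool" where
  "units_iso_gchi S mu e k m chi = (\<exists>phi.
     bij_betw phi (gchi_pts k m) (monoid_units S mu e)
     \<and> (\<forall>g\<in>gchi_pts k m. \<forall>h\<in>gchi_pts k m. phi (gchi_mult k m chi g h) = mu (phi g) (phi h))
     \<and> (\<forall>u\<in>S. gchi_regular k m (\<lambda>g. phi g u))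
     \<and> (\<forall>i<k. loc_regular S (monoid_units S mu e) (\<lambda>x. fst (inv_into (gchi_pts k m) phi x) i))
     \<and> (\<forall>j<m. loc_regular S (monoid_units S mu e) (\<lambda>x. snd (inv_into (gchi_pts k m) phi x) j)))"

end

theory Submission
  imports Defs
begin

definition Rk :: "nat \<Rightarrow> (nat \<Rightarrow> nat) \<Rightarrow> (nat \<Rightarrow> nat) set" where
  "Rk k P = {r. (\<forall>i<k. r i \<le> P i) \<and> (\<forall>i\<ge>k. r i = 0)}"

definition bn :: "nat \<Rightarrow> (nat \<Rightarrow> nat) \<Rightarrow> (nat \<Rightarrow> nat) \<Rightarrow> nat" where
  "bn k P r = (\<Prod>i<k. P i choose r i)"

lemma Rk_0: "Rk 0 P = {\<lambda>_. 0}"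
  by (auto simp: Rk_def)

lemma Rk_Suc: "Rk (Suc k) P = (\<lambda>(r,j). r(k:=j)) ` (Rk k P \<times> {..P k})"
proof (intro set_eqI iffI)
  fix s assume s: "s \<in> Rk (Suc k) P"
  have "s = (s(k:=0))(k := s k)" by simp
  moreover have "s(k:=0) \<in> Rk k P" using s by (auto simp: Rk_def)
  moreover have "s k \<le> P k" using s by (auto simp: Rk_def)
  ultimately show "s \<in> (\<lambda>(r,j). r(k:=j)) ` (Rk k P \<times> {..P k})"
    by (intro rev_image_eqI[of "(s(k:=0), s k)"]) auto
next
  fix s assume "s \<in> (\<lambda>(r,j). r(k:=j)) ` (Rk k P \<times> {..P k})"
  then show "s \<in> Rk (Suc k) P" by (auto simp: Rk_def less_Suc_eq)
qed

lemma Rk_Suc_inj: "inj_on (\<lambda>(r,j). r(k:=j)) (Rk k P \<times> {..P k})"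
proof (rule inj_onI, clarsimp)
  fix r j r' j' assume "r \<in> Rk k P" "r' \<in> Rk k P" and eq: "r(k := j) = r'(k := j')"
  then have "j = j'" by (metis fun_upd_same)
  moreover have "r = r'"
  proof
    fix i show "r i = r' i"
      using \<open>r \<in> Rk k P\<close> \<open>r' \<in> Rk k P\<close> eq unfolding Rk_def
      by (cases "i = k") (auto dest: fun_cong[where x=i])
  qed
  ultimately show "r = r' \<and> j = j'" by simp
qed

lemma finite_Rk: "finite (Rk k P)"
  by (induction k) (auto simp: Rk_0 Rk_Suc)

lemma sum_Rk_Suc:
  "(\<Sum>s\<in>Rk (Suc k) P. f s) = (\<Sum>r\<in>Rk k P. \<Sum>j\<le>P k. f (r(k:=j)))"
  unfolding Rk_Suc
  by (simp add: sum.reindex[OF Rk_Suc_inj] sum.cartesian_product prod.case_distrib)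

lemma bn_upd: "r \<in> Rk k P \<Longrightarrow> bn (Suc k) P (r(k:=j)) = bn k P r * (P k choose j)"
  unfolding bn_def by (simp add: prod.lessThan_Suc)

lemma prod_binomial_Rk:
  fixes X Y :: "nat \<Rightarrow> 'a::comm_semiring_1"
  shows "(\<Prod>i<k. (X i + Y i) ^ P i)
       = (\<Sum>r\<in>Rk k P. of_nat (bn k P r) * (\<Prod>i<k. X i ^ (P i - r i) * Y i ^ r i))"
proof (induction k)
  case 0 then show ?case by (simp add: Rk_0 bn_def)
next
  case (Suc k)
  have "(\<Prod>i<Suc k. (X i + Y i) ^ P i) = (\<Prod>i<k. (X i + Y i) ^ P i) * (Y k + X k) ^ P k"
    by (simp add: add.commute)
  also have "\<dots> = (\<Sum>r\<in>Rk k P. of_nat (bn k P r) * (\<Prod>i<k. X i ^ (P i - r i) * Y i ^ r i))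
      * (\<Sum>j\<le>P k. of_nat (P k choose j) * Y k ^ j * X k ^ (P k - j))"
    by (subst binomial_ring[of "Y k" "X k"], simp add: Suc.IH)
  also have "\<dots> = (\<Sum>r\<in>Rk k P. \<Sum>j\<le>P k. of_nat (bn k P r) * (\<Prod>i<k. X i ^ (P i - r i) * Y i ^ r i)
      * (of_nat (P k choose j) * Y k ^ j * X k ^ (P k - j)))"
    by (rule sum_product)
  also have "\<dots> = (\<Sum>r\<in>Rk k P. \<Sum>j\<le>P k. of_nat (bn (Suc k) P (r(k:=j))) *
       (\<Prod>i<Suc k. X i ^ (P i - (r(k:=j)) i) * Y i ^ (r(k:=j)) i))"
    by (intro sum.cong refl) (simp add: bn_upd prod.lessThan_Suc mult_ac)
  also have "\<dots> = (\<Sum>r\<in>Rk (Suc k) P. of_nat (bn (Suc k) P r) * (\<Prod>i<Suc k. X i ^ (P i - r i) * Y i ^ r i))"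
    by (simp add: sum_Rk_Suc)
  finally show ?case .
qed

lemma pascal_sum:
  fixes g :: "nat \<Rightarrow> 'a::comm_semiring_1"
  shows "(\<Sum>j\<le>Suc a. of_nat (Suc a choose j) * g j) = (\<Sum>j\<le>a. of_nat (a choose j) * (g j + g (Suc j)))"
proof -
  have A: "(\<Sum>j\<le>Suc a. of_nat (Suc a choose j) * g j)
      = g 0 + (\<Sum>j\<le>a. of_nat (a choose j) * g (Suc j)) + (\<Sum>j\<le>a. of_nat (a choose Suc j) * g (Suc j))"
    apply (subst sum.atMost_Suc_shift)
    apply (simp del: sum.atMost_Suc add: distrib_right sum.distrib add.assoc)
    done
  have B: "(\<Sum>j\<le>Suc a. of_nat (a choose j) * g j) = g 0 + (\<Sum>j\<le>a. of_nat (a choose Suc j) * g (Suc j))"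
    apply (subst sum.atMost_Suc_shift)
    apply (simp del: sum.atMost_Suc)
    done
  have C: "(\<Sum>j\<le>Suc a. of_nat (a choose j) * g j) = (\<Sum>j\<le>a. of_nat (a choose j) * g j)"
    by (simp add: binomial_eq_0)
  have D: "g 0 + (\<Sum>j\<le>a. of_nat (a choose Suc j) * g (Suc j)) = (\<Sum>j\<le>a. of_nat (a choose j) * g j)"
    using B C by metis
  show ?thesis unfolding A distrib_left sum.distrib D[symmetric] by (simp add: add_ac)
qed

lemma vandermonde_fun:
  fixes g :: "nat \<Rightarrow> 'a::comm_semiring_1"
  shows "(\<Sum>j\<le>a+b. of_nat (a+b choose j) * g j)
       = (\<Sum>i\<le>a. \<Sum>i'\<le>b. of_nat (a choose i) * of_nat (b choose i') * g (i+i'))"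
proof (induction a arbitrary: g)
  case 0 then show ?case by simp
next
  case (Suc a)
  define h where "h i = (\<Sum>i'\<le>b. of_nat (b choose i') * g (i+i'))" for i
  have "(\<Sum>j\<le>Suc a+b. of_nat (Suc a+b choose j) * g j)
      = (\<Sum>j\<le>a+b. of_nat (a+b choose j) * (g j + g (Suc j)))"
    using pascal_sum[of "a+b" g] by simp
  also have "\<dots> = (\<Sum>i\<le>a. \<Sum>i'\<le>b. of_nat (a choose i) * of_nat (b choose i') * (g (i+i') + g (Suc (i+i'))))"
    by (rule Suc.IH)
  also have "\<dots> = (\<Sum>i\<le>a. of_nat (a choose i) * (h i + h (Suc i)))"
    by (simp add: h_def sum_distrib_left distrib_left sum.distrib mult_ac)
  also have "\<dots> = (\<Sum>i\<le>Suc a. of_nat (Suc a choose i) * h i)"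
    by (rule pascal_sum[symmetric])
  also have "\<dots> = (\<Sum>i\<le>Suc a. \<Sum>i'\<le>b. of_nat (Suc a choose i) * of_nat (b choose i') * g (i+i'))"
    by (simp add: h_def sum_distrib_left mult_ac)
  finally show ?case .
qed

lemma vandermonde_Rk:
  fixes G :: "(nat \<Rightarrow> nat) \<Rightarrow> 'a::comm_semiring_1"
  shows "(\<Sum>s\<in>Rk k (\<lambda>i. P i + Q i). of_nat (bn k (\<lambda>i. P i + Q i) s) * G s)
       = (\<Sum>r\<in>Rk k P. \<Sum>r'\<in>Rk k Q. of_nat (bn k P r) * of_nat (bn k Q r') * G (\<lambda>i. r i + r' i))"
proof (induction k arbitrary: G)
  case 0 then show ?case by (simp add: Rk_0 bn_def)
next
  case (Suc k)
  define G' where "G' s = (\<Sum>j\<le>P k + Q k. of_nat (P k + Q k choose j) * G (s(k:=j)))" for s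
  have "(\<Sum>s\<in>Rk (Suc k) (\<lambda>i. P i + Q i). of_nat (bn (Suc k) (\<lambda>i. P i + Q i) s) * G s)
     = (\<Sum>s\<in>Rk k (\<lambda>i. P i + Q i). of_nat (bn k (\<lambda>i. P i + Q i) s) * G' s)"
    by (simp add: sum_Rk_Suc bn_upd G'_def sum_distrib_left mult_ac)
  also have "\<dots> = (\<Sum>r\<in>Rk k P. \<Sum>r'\<in>Rk k Q. of_nat (bn k P r) * of_nat (bn k Q r') * G' (\<lambda>i. r i + r' i))"
    by (rule Suc.IH)
  also have "\<dots> = (\<Sum>r\<in>Rk k P. \<Sum>r'\<in>Rk k Q. \<Sum>j\<le>P k. \<Sum>j'\<le>Q k.
       of_nat (bn k P r) * of_nat (bn k Q r') * (of_nat (P k choose j) * of_nat (Q k choose j') *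
         G ((\<lambda>i. r i + r' i)(k := j + j'))))"
    by (simp add: G'_def vandermonde_fun sum_distrib_left)
  also have "\<dots> = (\<Sum>r\<in>Rk k P. \<Sum>j\<le>P k. \<Sum>r'\<in>Rk k Q. \<Sum>j'\<le>Q k.
       of_nat (bn (Suc k) P (r(k:=j))) * of_nat (bn (Suc k) Q (r'(k:=j'))) *
         G (\<lambda>i. (r(k:=j)) i + (r'(k:=j')) i))"
  proof (intro sum.cong refl, goal_cases)
    case (1 r)
    have e: "(\<lambda>i. (if i = k then j else r i) + (if i = k then j' else r' i)) = (\<lambda>i. r i + r' i)(k := j + j')" for j j' r'
      by auto
    show ?case using 1
      by (subst sum.swap[where A="Rk k Q"]) (intro sum.cong refl, simp add: bn_upd e mult_ac)
  qed
  also have "\<dots> = (\<Sum>r\<in>Rk (Suc k) P. \<Sum>r'\<in>Rk (Suc k) Q. of_nat (bn (Suc k) P r) * of_nat (bn (Suc k) Q r') * G (\<lambda>i. r i + r' i))"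
    by (simp add: sum_Rk_Suc)
  finally show ?case .
qed

lemma bn_assoc:
  assumes "r \<in> Rk k P" "s \<in> Rk k (\<lambda>i. P i - r i)"
  shows "bn k P (\<lambda>i. r i + s i) * bn k (\<lambda>i. r i + s i) r = bn k P r * bn k (\<lambda>i. P i - r i) s"
  unfolding bn_def prod.distrib[symmetric]
proof (intro prod.cong refl)
  fix i assume "i \<in> {..<k}"
  then have "r i \<le> P i" "s i \<le> P i - r i" using assms by (auto simp: Rk_def)
  then show "(P i choose (r i + s i)) * ((r i + s i) choose r i) = (P i choose r i) * ((P i - r i) choose s i)"
    using choose_mult[of "r i" "r i + s i" "P i"] by simp
qed

lemma assoc_Rk:
  fixes J :: "(nat \<Rightarrow> nat) \<Rightarrow> (nat \<Rightarrow> nat) \<Rightarrow> 'a::comm_semiring_1"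
  shows "(\<Sum>r'\<in>Rk k P. \<Sum>s'\<in>Rk k r'. of_nat (bn k P r') * of_nat (bn k r' s') * J r' s')
       = (\<Sum>r\<in>Rk k P. \<Sum>s\<in>Rk k (\<lambda>i. P i - r i).
            of_nat (bn k P r) * of_nat (bn k (\<lambda>i. P i - r i) s) * J (\<lambda>i. r i + s i) r)"
proof -
  have "(\<Sum>r\<in>Rk k P. \<Sum>s\<in>Rk k (\<lambda>i. P i - r i).
            of_nat (bn k P r) * of_nat (bn k (\<lambda>i. P i - r i) s) * J (\<lambda>i. r i + s i) r)
     = (\<Sum>(r,s)\<in>(SIGMA r:Rk k P. Rk k (\<lambda>i. P i - r i)).
            of_nat (bn k P r) * of_nat (bn k (\<lambda>i. P i - r i) s) * J (\<lambda>i. r i + s i) r)"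
    by (rule sum.Sigma) (auto simp: finite_Rk)
  also have "\<dots> = (\<Sum>(r',s')\<in>(SIGMA r':Rk k P. Rk k r'). of_nat (bn k P r') * of_nat (bn k r' s') * J r' s')"
  proof (rule sum.reindex_bij_witness[where i="\<lambda>(r',s'). (s', \<lambda>i. r' i - s' i)" and j="\<lambda>(r,s). (\<lambda>i. r i + s i, r)"])
    fix a assume a: "a \<in> (SIGMA r:Rk k P. Rk k (\<lambda>i. P i - r i))"
    then show "(\<lambda>(r', s'). (s', \<lambda>i. r' i - s' i)) ((\<lambda>(r, s). (\<lambda>i. r i + s i, r)) a) = a"
      by auto
    show "(\<lambda>(r, s). (\<lambda>i. r i + s i, r)) a \<in> (SIGMA r':Rk k P. Rk k r')"
      using a by (auto simp: Rk_def) (metis le_diff_conv2 add.commute)+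
    show "(case (\<lambda>(r, s). (\<lambda>i. r i + s i, r)) a of (r', s') \<Rightarrow> of_nat (bn k P r') * of_nat (bn k r' s') * J r' s')
         = (case a of (r, s) \<Rightarrow> of_nat (bn k P r) * of_nat (bn k (\<lambda>i. P i - r i) s) * J (\<lambda>i. r i + s i) r)"
      using a bn_assoc[of _ k P] by (auto simp flip: of_nat_mult)
  next
    fix b assume b: "b \<in> (SIGMA r':Rk k P. Rk k r')"
    then show "(\<lambda>(r, s). (\<lambda>i. r i + s i, r)) ((\<lambda>(r', s'). (s', \<lambda>i. r' i - s' i)) b) = b"
    proof (cases b)
      case (Pair x y)
      have "(\<lambda>i. y i + (x i - y i)) = x"
      proof
        fix i show "y i + (x i - y i) = x i" using b Pair by (cases "i < k") (auto simp: Rk_def)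
      qed
      then show ?thesis using Pair by simp
    qed
    show "(\<lambda>(r', s'). (s', \<lambda>i. r' i - s' i)) b \<in> (SIGMA r:Rk k P. Rk k (\<lambda>i. P i - r i))"
      using b by (auto simp: Rk_def) (meson diff_le_mono le_trans)+
  qed
  also have "\<dots> = (\<Sum>r'\<in>Rk k P. \<Sum>s'\<in>Rk k r'. of_nat (bn k P r') * of_nat (bn k r' s') * J r' s')"
    by (rule sum.Sigma[symmetric]) (auto simp: finite_Rk)
  finally show ?thesis by simp
qed


definition ip :: "nat \<Rightarrow> (nat \<Rightarrow> int) \<Rightarrow> (nat \<Rightarrow> int) \<Rightarrow> int" where
  "ip n u v = (\<Sum>i<n. u i * v i)"

lemma ip_add1: "ip n (\<lambda>l. a l + b l) v = ip n a v + ip n b v"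
  by (simp add: ip_def distrib_right sum.distrib)
lemma ip_add2: "ip n v (\<lambda>l. a l + b l) = ip n v a + ip n v b"
  by (simp add: ip_def distrib_left sum.distrib)
lemma ip_neg1: "ip n (\<lambda>l. - a l) v = - ip n a v"
  by (simp add: ip_def sum_negf)
lemma ip_diff1: "ip n (\<lambda>l. a l - b l) v = ip n a v - ip n b v"
  by (simp add: ip_def left_diff_distrib sum_subtractf)
lemma ip_smult1: "ip n (\<lambda>l. c * a l) v = c * ip n a v"
  by (simp add: ip_def sum_distrib_left mult_ac)
lemma ip_sum1: "ip n (\<lambda>l. \<Sum>j\<in>J. f j l) v = (\<Sum>j\<in>J. ip n (f j) v)"
  by (simp add: ip_def sum_distrib_right sum.swap[of _ J])
lemma ip_zero1: "ip n (\<lambda>l. 0) v = 0"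
  by (simp add: ip_def)
lemma ip_comm: "ip n u v = ip n v u"
  by (simp add: ip_def mult.commute)

lemma lat_add: "a \<in> lat n \<Longrightarrow> b \<in> lat n \<Longrightarrow> (\<lambda>l. a l + b l) \<in> lat n"
  by (simp add: lat_def)
lemma lat_smult: "a \<in> lat n \<Longrightarrow> (\<lambda>l. c * a l) \<in> lat n"
  by (simp add: lat_def)
lemma lat_neg: "a \<in> lat n \<Longrightarrow> (\<lambda>l. - a l) \<in> lat n"
  by (simp add: lat_def)
lemma lat_sum: "(\<And>j. j \<in> J \<Longrightarrow> f j \<in> lat n) \<Longrightarrow> (\<lambda>l. \<Sum>j\<in>J. f j l) \<in> lat n"
  by (simp add: lat_def)
lemma lat_zero: "(\<lambda>l. 0) \<in> lat n"
  by (simp add: lat_def)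

lemma dual_monoid_ip: "dual_monoid n V = {u \<in> lat n. \<forall>v\<in>V. 0 \<le> ip n u v}"
  by (simp add: dual_monoid_def ip_def)

lemma powi_sum: "(t::'a::field) \<noteq> 0 \<Longrightarrow> t powi (\<Sum>i\<in>I. f i) = (\<Prod>i\<in>I. t powi f i)"
  by (induction I rule: infinite_finite_induct) (auto simp: power_int_add)

lemma prod_powi: "(\<Prod>j\<in>J. f j :: 'a::field) powi c = (\<Prod>j\<in>J. f j powi c)"
  by (induction J rule: infinite_finite_induct) (auto simp: power_int_mult_distrib)

lemma powi_split: "(t::'a::field) \<noteq> 0 \<Longrightarrow> t powi q = t ^ nat q / t ^ nat (- q)"
  by (cases "q \<ge> 0") (auto simp: power_int_def field_simps)

lemma alg_step:
  fixes xu Lx :: "'a::field" and t a :: "nat \<Rightarrow> 'a" and p qp qm :: "nat \<Rightarrow> nat" and q :: "nat \<Rightarrow> int"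
  assumes Lx: "Lx \<noteq> 0" and t: "\<And>j. j \<in> J \<Longrightarrow> t j \<noteq> 0" and I: "finite I" and J: "finite J"
    and q: "\<And>j. j \<in> J \<Longrightarrow> qp j = nat (q j) \<and> qm j = nat (- q j)"
    and R: "xu * (\<Prod>j\<in>J. (t j * Lx ^ N) ^ qm j) * Lx ^ (N * ((\<Sum>i\<in>I. p i) + (\<Sum>j\<in>J. qp j)))
          = (\<Prod>i\<in>I. (a i * Lx ^ (2 * N)) ^ p i) * (\<Prod>j\<in>J. (t j * Lx ^ N) ^ qp j) * Lx ^ (N * (\<Sum>j\<in>J. qm j))"
  shows "xu = (\<Prod>i\<in>I. a i ^ p i) * (\<Prod>j\<in>J. t j powi q j) * Lx ^ (N * (\<Sum>i\<in>I. p i))"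
proof -
  have e1: "(\<Prod>j\<in>J. (t j * Lx ^ N) ^ c j) = (\<Prod>j\<in>J. t j ^ c j) * Lx ^ (N * (\<Sum>j\<in>J. c j))" for c
    by (simp add: power_mult_distrib prod.distrib power_mult[symmetric] power_sum sum_distrib_left)
  have e2: "(\<Prod>i\<in>I. (a i * Lx ^ (2 * N)) ^ p i) = (\<Prod>i\<in>I. a i ^ p i) * Lx ^ (2 * N * (\<Sum>i\<in>I. p i))"
    by (simp add: power_mult_distrib prod.distrib power_mult[symmetric] power_sum sum_distrib_left)
  define Tm where "Tm = (\<Prod>j\<in>J. t j ^ qm j)"
  define Tp where "Tp = (\<Prod>j\<in>J. t j ^ qp j)"
  define PA where "PA = (\<Prod>i\<in>I. a i ^ p i)"
  define SP where "SP = (\<Sum>i\<in>I. p i)"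
  define SQp where "SQp = (\<Sum>j\<in>J. qp j)"
  define SQm where "SQm = (\<Sum>j\<in>J. qm j)"
  define Z where "Z = Lx ^ (N * SQm + N * SP + N * SQp)"
  have Z: "Z \<noteq> 0" using Lx by (simp add: Z_def)
  have Tm: "Tm \<noteq> 0" using t J by (simp add: Tm_def)
  have "xu * Tm * Z = PA * Tp * Lx ^ (N * SP) * Z"
  proof -
    have "xu * Tm * Z = xu * (Tm * Lx ^ (N * SQm)) * Lx ^ (N * (SP + SQp))"
      by (simp add: Z_def power_add distrib_left mult_ac)
    also have "\<dots> = PA * Lx ^ (2 * N * SP) * (Tp * Lx ^ (N * SQp)) * Lx ^ (N * SQm)"
      using R unfolding e1 e2 Tm_def Tp_def PA_def SP_def SQp_def SQm_def .
    also have "\<dots> = PA * Tp * Lx ^ (N * SP) * Z"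
    proof -
      have h: "Lx ^ (2 * N * SP) = Lx ^ (N * SP) * Lx ^ (N * SP)"
        by (metis power_add mult_2 add_mult_distrib)
      show ?thesis by (simp only: h Z_def power_add) (simp add: mult_ac)
    qed
    finally show ?thesis .
  qed
  then have "xu * Tm = PA * Tp * Lx ^ (N * SP)" using Z by simp
  then have "xu = PA * (Tp / Tm) * Lx ^ (N * SP)" using Tm by (simp add: field_simps)
  moreover have "(\<Prod>j\<in>J. t j powi q j) = Tp / Tm"
  proof -
    have "(\<Prod>j\<in>J. t j powi q j) = (\<Prod>j\<in>J. t j ^ qp j / t j ^ qm j)"
      using t q by (intro prod.cong refl) (simp add: powi_split)
    then show ?thesis by (simp add: prod_dividef Tp_def Tm_def)
  qed
  ultimately show ?thesis by (simp add: PA_def SP_def)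
qed

lemma sum_split_k:
  fixes k n :: nat
  assumes "k \<le> n"
  shows "(\<Sum>j<n. f j) = (\<Sum>j<k. f j) + (\<Sum>j<n-k. f (k + j) :: 'a::comm_monoid_add)"
proof -
  have "{..<n} = {..<k} \<union> {k..<n}" using assms by (auto intro: less_le_trans simp: not_le)
  then have "(\<Sum>j<n. f j) = (\<Sum>j<k. f j) + (\<Sum>j\<in>{k..<n}. f j)"
    by (metis sum.union_disjoint finite_lessThan finite_atLeastLessThan ivl_disj_int_one(2))
  also have "(\<Sum>j\<in>{k..<n}. f j) = (\<Sum>j<n-k. f (k + j))"
    using assms by (intro sum.reindex_bij_witness[where j="\<lambda>j. j - k" and i="\<lambda>j. k + j"]) auto
  finally show ?thesis .
qed

lemma sum_DN: "(\<Sum>j\<in>J. c j * (X j + M * Y)) = (\<Sum>j\<in>J. c j * X j) + M * (\<Sum>j\<in>J. c j) * (Y :: int)"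
  by (simp add: distrib_left sum.distrib sum_distrib_left sum_distrib_right mult_ac)

locale tsetup =
  fixes n k :: nat and V :: "(nat \<Rightarrow> int) set" and B D :: "nat \<Rightarrow> nat \<Rightarrow> int"
    and L :: "nat \<Rightarrow> int" and N :: nat and chi :: "nat \<Rightarrow> nat \<Rightarrow> int"
  assumes k_le: "k \<le> n"
  and V_lat: "V \<subseteq> lat n"
  and B_lat: "\<And>i. i < n \<Longrightarrow> B i \<in> lat n"
  and D_lat: "\<And>i. i < n \<Longrightarrow> D i \<in> lat n"
  and L_lat: "L \<in> lat n"
  and DB: "\<And>i j. i < n \<Longrightarrow> j < n \<Longrightarrow> ip n (D i) (B j) = (if i = j then 1 else 0)"
  and expand: "\<And>u. u \<in> lat n \<Longrightarrow> u = (\<lambda>l. \<Sum>j<n. ip n u (B j) * D j l)"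
  and LB: "\<And>i. i < k \<Longrightarrow> ip n L (B i) = 0"
  and V_cases: "\<And>v. v \<in> V \<Longrightarrow> 1 \<le> ip n L v \<or>
      ((\<forall>i<k. 0 \<le> ip n (D i) v) \<and> (\<forall>w. ip n w v = (\<Sum>i<k. ip n (D i) v * ip n w (B i))))"
  and B_pos: "\<And>u i. u \<in> dual_monoid n V \<Longrightarrow> i < k \<Longrightarrow> 0 \<le> ip n u (B i)"
  and N_large: "\<And>v i. v \<in> V \<Longrightarrow> i < n \<Longrightarrow>
      \<bar>ip n (D i) v\<bar> + \<bar>\<Sum>j<n-k. chi i j * ip n (D (k+j)) v\<bar> \<le> int N"
begin

abbreviation "m \<equiv> n - k"
abbreviation "S \<equiv> dual_monoid n V"

definition E :: "nat \<Rightarrow> nat \<Rightarrow> int" where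
  "E i = (\<lambda>l. - D i l + (\<Sum>j<n-k. chi i j * D (k+j) l) + int N * L l)"
definition Fv :: "nat \<Rightarrow> nat \<Rightarrow> int" where
  "Fv i = (\<lambda>l. - D i l + int N * L l)"
definition A :: "nat \<Rightarrow> nat \<Rightarrow> int" where
  "A i = (\<lambda>l. D i l + int N * L l)"
definition T :: "nat \<Rightarrow> nat \<Rightarrow> int" where
  "T j = (\<lambda>l. D (k+j) l + int N * L l)"
definition pn :: "(nat \<Rightarrow> int) \<Rightarrow> nat \<Rightarrow> nat" where
  "pn u = (\<lambda>i. if i < k then nat (ip n u (B i)) else 0)"
definition u1 :: "(nat \<Rightarrow> int) \<Rightarrow> (nat \<Rightarrow> nat) \<Rightarrow> nat \<Rightarrow> int" where
  "u1 u r = (\<lambda>l. u l + (\<Sum>i<k. int (r i) * E i l))"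
definition u2 :: "(nat \<Rightarrow> int) \<Rightarrow> (nat \<Rightarrow> nat) \<Rightarrow> nat \<Rightarrow> int" where
  "u2 u r = (\<lambda>l. u l + (\<Sum>i<k. (ip n u (B i) - int (r i)) * Fv i l))"
definition lam :: "nat \<Rightarrow> int" where
  "lam j = ip n L (B (k+j))"
definition Qf :: "nat \<Rightarrow> (nat \<Rightarrow> int) \<Rightarrow> int" where
  "Qf j u = ip n u (B (k+j)) + int N * lam j * (\<Sum>i<k. ip n u (B i))"

lemma E_lat: "i < n \<Longrightarrow> E i \<in> lat n"
  unfolding E_def using D_lat L_lat k_le
  by (intro lat_add lat_neg lat_sum lat_smult) auto
lemma Fv_lat: "i < n \<Longrightarrow> Fv i \<in> lat n"
  unfolding Fv_def using D_lat L_lat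
  by (intro lat_add lat_neg lat_smult) auto
lemma A_lat: "i < n \<Longrightarrow> A i \<in> lat n"
  unfolding A_def using D_lat L_lat
  by (intro lat_add lat_smult) auto
lemma T_lat: "j < m \<Longrightarrow> T j \<in> lat n"
  unfolding T_def using D_lat L_lat
  by (intro lat_add lat_smult) auto

lemma ip_Dsum_B:
  assumes "J \<subseteq> {..<n}" "j < n" "finite J"
  shows "ip n (\<lambda>l. \<Sum>i\<in>J. c i * D i l) (B j) = (if j \<in> J then c j else 0)"
proof -
  have "ip n (\<lambda>l. \<Sum>i\<in>J. c i * D i l) (B j) = (\<Sum>i\<in>J. c i * (if i = j then 1 else 0))"
    using assms by (simp add: ip_sum1 ip_smult1 DB subset_iff)
  also have "\<dots> = (if j \<in> J then c j else 0)"
    using assms(3) by (simp add: if_distrib sum.delta' cong: if_cong)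
  finally show ?thesis .
qed

lemma E_B: "i < k \<Longrightarrow> j < n \<Longrightarrow> ip n (E i) (B j)
   = - (if i = j then 1 else 0) + (if k \<le> j then chi i (j - k) else 0) + int N * ip n L (B j)"
proof -
  assume a: "i < k" "j < n"
  have s: "(\<lambda>l. \<Sum>j'<n-k. chi i j' * D (k+j') l) = (\<lambda>l. \<Sum>j'\<in>{k..<n}. chi i (j'-k) * D j' l)"
  proof
    fix l
    show "(\<Sum>j'<n-k. chi i j' * D (k+j') l) = (\<Sum>j'\<in>{k..<n}. chi i (j'-k) * D j' l)"
      using k_le by (intro sum.reindex_bij_witness[where i="\<lambda>j. j - k" and j="\<lambda>j. k + j"]) auto
  qed
  have "ip n (\<lambda>l. \<Sum>j'\<in>{k..<n}. chi i (j'-k) * D j' l) (B j) = (if j \<in> {k..<n} then chi i (j-k) else 0)"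
    using a by (intro ip_Dsum_B) auto
  then show ?thesis using a k_le
    unfolding E_def ip_add1 ip_neg1 ip_smult1 s by (simp add: DB)
qed

lemma Fv_B: "i < k \<Longrightarrow> j < n \<Longrightarrow> ip n (Fv i) (B j) = - (if i = j then 1 else 0) + int N * ip n L (B j)"
  using k_le unfolding Fv_def ip_add1 ip_neg1 ip_smult1 by (simp add: DB)

lemma A_B: "i < k \<Longrightarrow> j < n \<Longrightarrow> ip n (A i) (B j) = (if i = j then 1 else 0) + int N * ip n L (B j)"
  using k_le unfolding A_def ip_add1 ip_neg1 ip_smult1 by (simp add: DB)

lemma T_B: "j' < m \<Longrightarrow> j < n \<Longrightarrow> ip n (T j') (B j) = (if k + j' = j then 1 else 0) + int N * ip n L (B j)"
  using k_le unfolding T_def ip_add1 ip_neg1 ip_smult1 by (simp add: DB)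

lemma E_Bk: "i < k \<Longrightarrow> i' < k \<Longrightarrow> ip n (E i) (B i') = - (if i = i' then 1 else 0)"
  using E_B[of i i'] LB k_le by simp
lemma Fv_Bk: "i < k \<Longrightarrow> i' < k \<Longrightarrow> ip n (Fv i) (B i') = - (if i = i' then 1 else 0)"
  using Fv_B[of i i'] LB k_le by simp

lemma ip_comb: "ip n (\<lambda>l. u l + (\<Sum>i\<in>I. c i * W i l)) w = ip n u w + (\<Sum>i\<in>I. c i * ip n (W i) w)"
  by (simp add: ip_add1 ip_sum1 ip_smult1)

lemma Qf_comb: "Qf j (\<lambda>l. u l + (\<Sum>i\<in>I. c i * W i l)) = Qf j u + (\<Sum>i\<in>I. c i * Qf j (W i))"
  unfolding Qf_def ip_comb
  by (simp add: sum.distrib sum_distrib_left distrib_left algebra_simps sum.swap[of _ I])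

lemma sum_delta_lt: "i < k \<Longrightarrow> (\<Sum>i'<k. c i' * (if i' = i then 1 else 0)) = (c i :: int)"
  by (simp add: if_distrib sum.delta cong: if_cong)

lemma Qf_E: "i < k \<Longrightarrow> j < m \<Longrightarrow> Qf j (E i) = chi i j"
proof -
  assume a: "i < k" "j < m"
  have "(\<Sum>i'<k. ip n (E i) (B i')) = -1"
    using a by (simp add: E_Bk sum_negf sum.delta sum.delta' cong: if_cong)
  then show ?thesis using a E_B[of i "k+j"] unfolding Qf_def lam_def by simp
qed

lemma Qf_Fv: "i < k \<Longrightarrow> j < m \<Longrightarrow> Qf j (Fv i) = 0"
proof -
  assume a: "i < k" "j < m"
  have "(\<Sum>i'<k. ip n (Fv i) (B i')) = -1"
    using a by (simp add: Fv_Bk sum_negf sum.delta sum.delta' cong: if_cong)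
  then show ?thesis using a Fv_B[of i "k+j"] unfolding Qf_def lam_def by simp
qed

lemma Qf_L: "j < m \<Longrightarrow> Qf j L = lam j"
  unfolding Qf_def lam_def by (simp add: LB)

lemma Qf_A: "i < k \<Longrightarrow> j < m \<Longrightarrow> Qf j (A i) = 2 * int N * lam j"
proof -
  assume a: "i < k" "j < m"
  have "(\<Sum>i'<k. ip n (A i) (B i')) = 1"
    using a k_le by (simp add: A_B LB sum.delta cong: if_cong)
  then show ?thesis using a A_B[of i "k+j"] unfolding Qf_def lam_def by simp
qed

lemma Qf_T: "j' < m \<Longrightarrow> j < m \<Longrightarrow> Qf j (T j') = (if j' = j then 1 else 0) + int N * lam j"
proof -
  assume a: "j' < m" "j < m"
  have "(\<Sum>i'<k. ip n (T j') (B i')) = 0"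
    using a k_le by (simp add: T_B LB)
  then show ?thesis using a T_B[of j' "k+j"] unfolding Qf_def lam_def by simp
qed

lemma A_Bk: "i < k \<Longrightarrow> i' < k \<Longrightarrow> ip n (A i) (B i') = (if i = i' then 1 else 0)"
  using A_B[of i i'] LB k_le by simp
lemma T_Bk: "j < m \<Longrightarrow> i' < k \<Longrightarrow> ip n (T j) (B i') = 0"
  using T_B[of j i'] LB k_le by simp

lemma bounds:
  assumes v: "v \<in> V" "1 \<le> ip n L v"
  shows "i < k \<Longrightarrow> 0 \<le> ip n (E i) v" and "i < k \<Longrightarrow> 0 \<le> ip n (Fv i) v"
    and "i < k \<Longrightarrow> 0 \<le> ip n (A i) v" and "j < m \<Longrightarrow> 0 \<le> ip n (T j) v"
    and "0 \<le> ip n L v"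
proof -
  have NL: "int N \<le> int N * ip n L v" using v(2) by (simp add: mult_le_cancel_left1)
  show "i < k \<Longrightarrow> 0 \<le> ip n (E i) v"
    using N_large[OF v(1), of i] k_le NL unfolding E_def ip_add1 ip_neg1 ip_smult1 ip_sum1
    by (simp add: ip_smult1)
  show "i < k \<Longrightarrow> 0 \<le> ip n (Fv i) v"
    using N_large[OF v(1), of i] k_le NL unfolding Fv_def ip_add1 ip_neg1 ip_smult1
    by simp
  show "i < k \<Longrightarrow> 0 \<le> ip n (A i) v"
    using N_large[OF v(1), of i] k_le NL unfolding A_def ip_add1 ip_neg1 ip_smult1
    by simp
  show "j < m \<Longrightarrow> 0 \<le> ip n (T j) v"
    using N_large[OF v(1), of "k+j"] k_le NL unfolding T_def ip_add1 ip_neg1 ip_smult1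
    by (simp add: less_diff_conv add.commute)
  show "0 \<le> ip n L v" using v by simp
qed

lemma S_intro:
  assumes "w \<in> lat n" "\<And>v. v \<in> V \<Longrightarrow> 1 \<le> ip n L v \<Longrightarrow> 0 \<le> ip n w v"
    "\<And>i. i < k \<Longrightarrow> 0 \<le> ip n w (B i)"
  shows "w \<in> S"
  unfolding dual_monoid_ip
proof (intro CollectI conjI ballI)
  show "w \<in> lat n" by fact
  fix v assume v: "v \<in> V"
  show "0 \<le> ip n w v"
  proof (cases "1 \<le> ip n L v")
    case True then show ?thesis using assms(2) v by blast
  next
    case False
    then have "(\<forall>i<k. 0 \<le> ip n (D i) v) \<and> ip n w v = (\<Sum>i<k. ip n (D i) v * ip n w (B i))"
      using V_cases[OF v] by blast
    then show ?thesis using assms(3) by (auto intro!: sum_nonneg)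
  qed
qed

lemma S_lat: "u \<in> S \<Longrightarrow> u \<in> lat n"
  by (simp add: dual_monoid_def)

lemma L_S: "L \<in> S"
  by (rule S_intro) (auto simp: L_lat LB)
lemma A_S: "i < k \<Longrightarrow> A i \<in> S"
  using k_le by (intro S_intro) (auto simp: A_lat bounds A_Bk)
lemma T_S: "j < m \<Longrightarrow> T j \<in> S"
  using k_le by (intro S_intro) (auto simp: T_lat bounds T_Bk)
lemma zero_S: "(\<lambda>l. 0) \<in> S"
  by (simp add: dual_monoid_ip lat_def ip_def)
lemma add_S: "a \<in> S \<Longrightarrow> b \<in> S \<Longrightarrow> (\<lambda>l. a l + b l) \<in> S"
  by (auto simp: dual_monoid_ip lat_def ip_add1)

lemma ip_u1: "ip n (u1 u r) w = ip n u w + (\<Sum>i<k. int (r i) * ip n (E i) w)"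
  unfolding u1_def by (rule ip_comb)
lemma ip_u2: "ip n (u2 u r) w = ip n u w + (\<Sum>i<k. (ip n u (B i) - int (r i)) * ip n (Fv i) w)"
  unfolding u2_def by (rule ip_comb)

lemma u1_B: "i' < k \<Longrightarrow> ip n (u1 u r) (B i') = ip n u (B i') - int (r i')"
  by (simp add: ip_u1 E_Bk if_distrib sum_negf cong: if_cong) 
lemma u2_B: "i' < k \<Longrightarrow> ip n (u2 u r) (B i') = int (r i')"
  by (simp add: ip_u2 Fv_Bk if_distrib sum_negf cong: if_cong) 

lemma Rk_le: "r \<in> Rk k P \<Longrightarrow> i < k \<Longrightarrow> r i \<le> P i"
  by (simp add: Rk_def)
lemma Rk_zero: "r \<in> Rk k P \<Longrightarrow> k \<le> i \<Longrightarrow> r i = 0"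
  by (simp add: Rk_def)

lemma pn_le: "u \<in> S \<Longrightarrow> r \<in> Rk k (pn u) \<Longrightarrow> i < k \<Longrightarrow> int (r i) \<le> ip n u (B i)"
  using Rk_le[of r "pn u" i] B_pos[of u i] by (simp add: pn_def)

lemma u1_S: "u \<in> S \<Longrightarrow> r \<in> Rk k (pn u) \<Longrightarrow> u1 u r \<in> S"
proof (rule S_intro)
  assume u: "u \<in> S" and r: "r \<in> Rk k (pn u)"
  show "u1 u r \<in> lat n" unfolding u1_def using S_lat[OF u] E_lat k_le
    by (intro lat_add lat_sum lat_smult) auto
  fix v assume "v \<in> V" "1 \<le> ip n L v"
  then show "0 \<le> ip n (u1 u r) v" using u unfolding ip_u1 dual_monoid_ip
    by (auto intro!: add_nonneg_nonneg sum_nonneg bounds mult_nonneg_nonneg)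
next
  fix i assume "u \<in> S" "r \<in> Rk k (pn u)" "i < k"
  then show "0 \<le> ip n (u1 u r) (B i)" using pn_le by (simp add: u1_B)
qed

lemma u2_S: "u \<in> S \<Longrightarrow> r \<in> Rk k (pn u) \<Longrightarrow> u2 u r \<in> S"
proof (rule S_intro)
  assume u: "u \<in> S" and r: "r \<in> Rk k (pn u)"
  show "u2 u r \<in> lat n" unfolding u2_def using S_lat[OF u] Fv_lat k_le
    by (intro lat_add lat_sum lat_smult) auto
  fix v assume "v \<in> V" "1 \<le> ip n L v"
  then show "0 \<le> ip n (u2 u r) v" using u r pn_le unfolding ip_u2 dual_monoid_ip
    by (auto intro!: add_nonneg_nonneg sum_nonneg bounds mult_nonneg_nonneg)
next
  fix i assume "u \<in> S" "r \<in> Rk k (pn u)" "i < k"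
  then show "0 \<le> ip n (u2 u r) (B i)" by (simp add: u2_B)
qed

lemma pn_u1: "u \<in> S \<Longrightarrow> r \<in> Rk k (pn u) \<Longrightarrow> pn (u1 u r) = (\<lambda>i. pn u i - r i)"
proof
  fix i assume "u \<in> S" "r \<in> Rk k (pn u)"
  then show "pn (u1 u r) i = pn u i - r i"
    using pn_le[of u r i] Rk_zero[of r "pn u" i] by (auto simp: pn_def u1_B nat_diff_distrib)
qed

lemma pn_u2: "r \<in> Rk k P \<Longrightarrow> pn (u2 u r) = r"
proof
  fix i assume "r \<in> Rk k P"
  then show "pn (u2 u r) i = r i"
    using Rk_zero[of r P i] by (auto simp: pn_def u2_B)
qed

lemma Qf_u1: "j < m \<Longrightarrow> Qf j (u1 u r) = Qf j u + (\<Sum>i<k. int (r i) * chi i j)"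
  unfolding u1_def Qf_comb by (simp add: Qf_E)
lemma Qf_u2: "j < m \<Longrightarrow> Qf j (u2 u r) = Qf j u"
  unfolding u2_def Qf_comb by (simp add: Qf_Fv)

lemma pts_mult: "x \<in> toric_pts S \<Longrightarrow> a \<in> S \<Longrightarrow> b \<in> S \<Longrightarrow> x (\<lambda>i. a i + b i) = x a * x b"
  by (simp add: toric_pts_def)
lemma pts_out: "x \<in> toric_pts S \<Longrightarrow> u \<notin> S \<Longrightarrow> x u = 0"
  by (simp add: toric_pts_def)
lemma pts_zero: "x \<in> toric_pts S \<Longrightarrow> x (\<lambda>_. 0) = 1"
  by (simp add: toric_pts_def)

lemma pn_add: "a \<in> S \<Longrightarrow> b \<in> S \<Longrightarrow> pn (\<lambda>l. a l + b l) = (\<lambda>i. pn a i + pn b i)"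
  using B_pos by (auto simp: pn_def ip_add1 nat_add_distrib)

lemma u1_add: "u1 (\<lambda>l. a l + b l) (\<lambda>i. r i + r' i) = (\<lambda>l. u1 a r l + u1 b r' l)"
  by (simp add: u1_def distrib_right sum.distrib algebra_simps)
lemma u2_add: "u2 (\<lambda>l. a l + b l) (\<lambda>i. r i + r' i) = (\<lambda>l. u2 a r l + u2 b r' l)"
  by (simp add: u2_def ip_add1 distrib_right sum.distrib algebra_simps sum_subtractf)

lemma pn_zero: "pn (\<lambda>_. 0) = (\<lambda>_. 0)"
proof
  fix i show "pn (\<lambda>_. 0) i = 0" unfolding pn_def ip_def by simp
qed

lemma Rk_zero_set: "Rk k (\<lambda>_. 0) = {\<lambda>_. 0}"
  by (auto simp: Rk_def) (metis le_zero_eq not_le)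
lemma u1_zero: "u1 u (\<lambda>_. 0) = u"
  by (simp add: u1_def)
lemma u2_zero: "u2 (\<lambda>_. 0) (\<lambda>_. 0) = (\<lambda>_. 0)"
  by (simp add: u2_def ip_def)

definition mu :: "((nat \<Rightarrow> int) \<Rightarrow> 'K::field) \<Rightarrow> ((nat \<Rightarrow> int) \<Rightarrow> 'K) \<Rightarrow> ((nat \<Rightarrow> int) \<Rightarrow> 'K)" where
  "mu x y = (\<lambda>u. if u \<in> S then (\<Sum>r\<in>Rk k (pn u). of_nat (bn k (pn u) r) * x (u1 u r) * y (u2 u r)) else 0)"

lemma mu_pts:
  assumes x: "x \<in> toric_pts S" and y: "y \<in> toric_pts S"
  shows "mu x y \<in> toric_pts S"
  unfolding toric_pts_def
proof (intro CollectI conjI ballI allI impI)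
  show "mu x y (\<lambda>_. 0) = 1"
    using zero_S pts_zero[OF x] pts_zero[OF y]
    by (simp add: mu_def pn_zero Rk_zero_set bn_def u1_zero u2_zero)
  fix u assume "u \<notin> S" then show "mu x y u = 0" by (simp add: mu_def)
next
  fix a b assume a: "a \<in> S" and b: "b \<in> S"
  let ?G = "\<lambda>s. x (u1 (\<lambda>l. a l + b l) s) * y (u2 (\<lambda>l. a l + b l) s)"
  have "mu x y (\<lambda>i. a i + b i) = (\<Sum>s\<in>Rk k (\<lambda>i. pn a i + pn b i). of_nat (bn k (\<lambda>i. pn a i + pn b i) s) * ?G s)"
    using add_S[OF a b] by (simp add: mu_def pn_add[OF a b] mult.assoc)
  also have "\<dots> = (\<Sum>r\<in>Rk k (pn a). \<Sum>r'\<in>Rk k (pn b). of_nat (bn k (pn a) r) * of_nat (bn k (pn b) r') * ?G (\<lambda>i. r i + r' i))"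
    by (rule vandermonde_Rk)
  also have "\<dots> = (\<Sum>r\<in>Rk k (pn a). \<Sum>r'\<in>Rk k (pn b). (of_nat (bn k (pn a) r) * x (u1 a r) * y (u2 a r)) *
        (of_nat (bn k (pn b) r') * x (u1 b r') * y (u2 b r')))"
    by (intro sum.cong refl)
       (simp add: u1_add u2_add pts_mult[OF x] pts_mult[OF y] u1_S u2_S a b mult_ac)
  also have "\<dots> = mu x y a * mu x y b"
    using a b by (simp add: mu_def sum_product)
  finally show "mu x y (\<lambda>i. a i + b i) = mu x y a * mu x y b" .
qed

lemma u1_u1: "u1 (u1 u r) s = u1 u (\<lambda>i. r i + s i)"
  by (simp add: u1_def distrib_right sum.distrib algebra_simps)

lemma u1_u2: "u1 (u2 u (\<lambda>i. r i + s i)) r = u2 (u1 u r) s"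
proof
  fix l
  have "(\<Sum>i<k. (ip n (u1 u r) (B i) - int (s i)) * Fv i l) = (\<Sum>i<k. (ip n u (B i) - int (r i + s i)) * Fv i l)"
    by (intro sum.cong refl) (simp add: u1_B algebra_simps)
  then show "u1 (u2 u (\<lambda>i. r i + s i)) r l = u2 (u1 u r) s l"
    unfolding u1_def u2_def by simp
qed

lemma u2_u2: "u2 (u2 u (\<lambda>i. r i + s i)) r = u2 u r"
proof
  fix l
  have "(\<Sum>i<k. (ip n u (B i) - int (r i + s i)) * Fv i l) + (\<Sum>i<k. (ip n (u2 u (\<lambda>i. r i + s i)) (B i) - int (r i)) * Fv i l)
      = (\<Sum>i<k. (ip n u (B i) - int (r i)) * Fv i l)"
    by (simp add: u2_B sum.distrib[symmetric] algebra_simps)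
  then show "u2 (u2 u (\<lambda>i. r i + s i)) r l = u2 u r l"
    unfolding u2_def by (simp add: add.assoc)
qed

lemma mu_assoc:
  assumes x: "x \<in> toric_pts S" and y: "y \<in> toric_pts S" and z: "z \<in> toric_pts S"
  shows "mu (mu x y) z = mu x (mu y z)"
proof
  fix u
  show "mu (mu x y) z u = mu x (mu y z) u"
  proof (cases "u \<in> S")
    case False then show ?thesis by (simp add: mu_def)
  next
    case u: True
    define J where "J r' s' = x (u1 u r') * y (u1 (u2 u r') s') * z (u2 (u2 u r') s')" for r' s'
    have "mu x (mu y z) u = (\<Sum>r'\<in>Rk k (pn u). \<Sum>s'\<in>Rk k r'. of_nat (bn k (pn u) r') * of_nat (bn k r' s') * J r' s')"
      using u by (simp add: mu_def u2_S pn_u2 J_def sum_distrib_left sum_distrib_right mult_ac)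
    also have "\<dots> = (\<Sum>r\<in>Rk k (pn u). \<Sum>s\<in>Rk k (\<lambda>i. pn u i - r i).
            of_nat (bn k (pn u) r) * of_nat (bn k (\<lambda>i. pn u i - r i) s) * J (\<lambda>i. r i + s i) r)"
      by (rule assoc_Rk)
    also have "\<dots> = mu (mu x y) z u"
      using u by (simp add: mu_def u1_S pn_u1 J_def u1_u1 u1_u2 u2_u2 sum_distrib_left sum_distrib_right mult_ac)
    finally show ?thesis by simp
  qed
qed

definition e :: "(nat \<Rightarrow> int) \<Rightarrow> 'K::field" where
  "e u = (if u \<in> S \<and> (\<forall>i<k. ip n u (B i) = 0) then 1 else 0)"

lemma e_pts: "e \<in> toric_pts S"
  unfolding toric_pts_def
proof (intro CollectI conjI ballI allI impI)
  show "e (\<lambda>_. 0) = 1" using zero_S by (simp add: e_def ip_def)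
  fix u assume "u \<notin> S" then show "e u = 0" by (simp add: e_def)
next
  fix a b assume a: "a \<in> S" and b: "b \<in> S"
  have "(\<forall>i<k. ip n (\<lambda>l. a l + b l) (B i) = 0) \<longleftrightarrow> (\<forall>i<k. ip n a (B i) = 0) \<and> (\<forall>i<k. ip n b (B i) = 0)"
    using B_pos[OF a] B_pos[OF b] by (auto simp: ip_add1) (smt (verit))+
  then show "e (\<lambda>i. a i + b i) = e a * e b"
    using add_S[OF a b] a b by (simp add: e_def)
qed

lemma pn_Rk: "pn u \<in> Rk k (pn u)"
  by (simp add: Rk_def pn_def)
lemma zero_Rk: "(\<lambda>_. 0) \<in> Rk k P"
  by (simp add: Rk_def)

lemma e_u1: "u \<in> S \<Longrightarrow> r \<in> Rk k (pn u) \<Longrightarrow> e (u1 u r) = (if r = pn u then 1 else 0)"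
proof -
  assume u: "u \<in> S" and r: "r \<in> Rk k (pn u)"
  have "(\<forall>i<k. ip n (u1 u r) (B i) = 0) \<longleftrightarrow> r = pn u"
  proof
    assume h: "\<forall>i<k. ip n (u1 u r) (B i) = 0"
    show "r = pn u"
    proof
      fix i show "r i = pn u i"
        using h r Rk_zero[OF r, of i] by (cases "i < k") (auto simp: u1_B pn_def)
    qed
  next
    assume "r = pn u"
    then show "\<forall>i<k. ip n (u1 u r) (B i) = 0" using B_pos[OF u] by (simp add: u1_B pn_def)
  qed
  then show ?thesis using u1_S[OF u r] by (simp add: e_def)
qed

lemma e_u2: "r \<in> Rk k P \<Longrightarrow> e (u2 u r) = (if u2 u r \<in> S then (if r = (\<lambda>_. 0) then 1 else 0) else 0)"
proof -
  assume r: "r \<in> Rk k P"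
  have "(\<forall>i<k. ip n (u2 u r) (B i) = 0) \<longleftrightarrow> r = (\<lambda>_. 0)"
  proof
    assume h: "\<forall>i<k. ip n (u2 u r) (B i) = 0"
    show "r = (\<lambda>_. 0)"
    proof
      fix i show "r i = 0"
        using h Rk_zero[OF r, of i] by (cases "i < k") (auto simp: u2_B)
    qed
  qed (simp add: u2_B)
  then show ?thesis by (simp add: e_def)
qed

lemma u2_pn: "u \<in> S \<Longrightarrow> u2 u (pn u) = u"
  using B_pos by (simp add: u2_def pn_def)

lemma bn_diag: "bn k P P = 1"
  by (simp add: bn_def)
lemma bn_zero: "bn k P (\<lambda>_. 0) = 1"
  by (simp add: bn_def)

lemma mu_e_left: "x \<in> toric_pts S \<Longrightarrow> mu e x = x"
proof
  fix u assume x: "x \<in> toric_pts S"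
  show "mu e x u = x u"
  proof (cases "u \<in> S")
    case False then show ?thesis using pts_out[OF x] by (simp add: mu_def)
  next
    case u: True
    have "mu e x u = (\<Sum>r\<in>Rk k (pn u). if r = pn u then of_nat (bn k (pn u) r) * x (u2 u r) else 0)"
      using u by (simp add: mu_def e_u1 if_distrib[of "\<lambda>t. of_nat _ * t * _"] cong: sum.cong if_cong)
    also have "\<dots> = x u"
      using u by (simp add: sum.delta' finite_Rk pn_Rk bn_diag u2_pn)
    finally show ?thesis .
  qed
qed

lemma mu_e_right: "x \<in> toric_pts S \<Longrightarrow> mu x e = x"
proof
  fix u assume x: "x \<in> toric_pts S"
  show "mu x e u = x u"
  proof (cases "u \<in> S")
    case False then show ?thesis using pts_out[OF x] by (simp add: mu_def)
  next
    case u: True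
    have "mu x e u = (\<Sum>r\<in>Rk k (pn u). if r = (\<lambda>_. 0) then of_nat (bn k (pn u) r) * x (u1 u r) else 0)"
      using u u2_S by (simp add: mu_def e_u2 if_distrib[of "\<lambda>t. _ * t"] cong: sum.cong if_cong)
    also have "\<dots> = x u"
      using u by (simp add: sum.delta' finite_Rk zero_Rk bn_zero u1_zero)
    finally show ?thesis .
  qed
qed

lemma Qf_add: "Qf j (\<lambda>l. a l + b l) = Qf j a + Qf j b"
  unfolding Qf_def by (simp add: ip_add1 sum.distrib algebra_simps)
lemma Qf_zero: "Qf j (\<lambda>_. 0) = 0"
  unfolding Qf_def ip_def by simp

definition phi :: "(nat \<Rightarrow> 'K::field) \<times> (nat \<Rightarrow> 'K) \<Rightarrow> (nat \<Rightarrow> int) \<Rightarrow> 'K" where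
  "phi g = (\<lambda>u. if u \<in> S then (\<Prod>i<k. fst g i ^ pn u i) * (\<Prod>j<m. snd g j powi Qf j u) else 0)"

lemma gchi_ptsD: "g \<in> gchi_pts k m \<Longrightarrow> j < m \<Longrightarrow> snd g j \<noteq> 0"
  by (auto simp: gchi_pts_def)

lemma phi_pts:
  assumes g: "g \<in> gchi_pts k m"
  shows "phi g \<in> toric_pts S"
  unfolding toric_pts_def
proof (intro CollectI conjI ballI allI impI)
  show "phi g (\<lambda>_. 0) = 1" using zero_S by (simp add: phi_def pn_zero Qf_zero)
  fix u assume "u \<notin> S" then show "phi g u = 0" by (simp add: phi_def)
next
  fix a b assume a: "a \<in> S" and b: "b \<in> S"
  have "(\<Prod>j<m. snd g j powi Qf j (\<lambda>l. a l + b l)) = (\<Prod>j<m. snd g j powi Qf j a) * (\<Prod>j<m. snd g j powi Qf j b)"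
    unfolding prod.distrib[symmetric]
    by (intro prod.cong refl) (simp add: Qf_add power_int_add gchi_ptsD[OF g])
  then show "phi g (\<lambda>i. a i + b i) = phi g a * phi g b"
    using a b add_S[OF a b] by (simp add: phi_def pn_add power_add prod.distrib mult_ac)
qed

lemma chr_prod:
  assumes t: "\<And>j. j < m \<Longrightarrow> t j \<noteq> (0::'K::field)"
  shows "(\<Prod>i<k. chr m (chi i) t ^ r i) = (\<Prod>j<m. t j powi (\<Sum>i<k. int (r i) * chi i j))"
proof -
  have "(\<Prod>i<k. chr m (chi i) t ^ r i) = (\<Prod>i<k. \<Prod>j<m. t j powi (int (r i) * chi i j))"
    unfolding chr_def
    by (intro prod.cong refl) (simp add: prod_power_distrib power_int_power' ac_simps)
  also have "\<dots> = (\<Prod>j<m. \<Prod>i<k. t j powi (int (r i) * chi i j))"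
    by (rule prod.swap)
  also have "\<dots> = (\<Prod>j<m. t j powi (\<Sum>i<k. int (r i) * chi i j))"
    using t by (intro prod.cong refl) (simp add: powi_sum)
  finally show ?thesis .
qed

lemma phi_hom:
  fixes g h :: "(nat \<Rightarrow> 'K::field) \<times> (nat \<Rightarrow> 'K)"
  assumes g: "g \<in> gchi_pts k m" and h: "h \<in> gchi_pts k m"
  shows "phi (gchi_mult k m chi g h) = mu (phi g) (phi h)"
proof
  fix u
  obtain a t where gat: "g = (a, t)" by (cases g)
  obtain a' t' where hat: "h = (a', t')" by (cases h)
  have t: "\<And>j. j < m \<Longrightarrow> t j \<noteq> 0" using gchi_ptsD[OF g] gat by auto
  have t': "\<And>j. j < m \<Longrightarrow> t' j \<noteq> 0" using gchi_ptsD[OF h] hat by auto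
  show "phi (gchi_mult k m chi g h) u = mu (phi g) (phi h) u"
  proof (cases "u \<in> S")
    case False then show ?thesis by (simp add: phi_def mu_def)
  next
    case u: True
    let ?P = "pn u"
    have "phi (gchi_mult k m chi g h) u
        = (\<Prod>i<k. (a i + chr m (chi i) t * a' i) ^ ?P i) * (\<Prod>j<m. (t j * t' j) powi Qf j u)"
      using u by (simp add: phi_def gchi_mult_def gat hat)
    also have "\<dots> = (\<Sum>r\<in>Rk k ?P. of_nat (bn k ?P r) * (\<Prod>i<k. a i ^ (?P i - r i) * (chr m (chi i) t * a' i) ^ r i))
        * (\<Prod>j<m. (t j * t' j) powi Qf j u)"
      by (simp add: prod_binomial_Rk)
    also have "\<dots> = (\<Sum>r\<in>Rk k ?P. of_nat (bn k ?P r) * phi g (u1 u r) * phi h (u2 u r))"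
      unfolding sum_distrib_right
    proof (intro sum.cong refl)
      fix r assume r: "r \<in> Rk k ?P"
      have 1: "(\<Prod>i<k. a i ^ (?P i - r i) * (chr m (chi i) t * a' i) ^ r i)
          = (\<Prod>i<k. a i ^ (?P i - r i)) * (\<Prod>i<k. a' i ^ r i) * (\<Prod>j<m. t j powi (\<Sum>i<k. int (r i) * chi i j))"
        by (simp add: power_mult_distrib prod.distrib chr_prod[OF t] mult_ac)
      have 2: "(\<Prod>j<m. (t j * t' j) powi Qf j u) * (\<Prod>j<m. t j powi (\<Sum>i<k. int (r i) * chi i j))
          = (\<Prod>j<m. t j powi Qf j (u1 u r)) * (\<Prod>j<m. t' j powi Qf j (u2 u r))"
        unfolding prod.distrib[symmetric]
        by (intro prod.cong refl) (simp add: Qf_u1 Qf_u2 power_int_mult_distrib power_int_add t mult_ac)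
      let ?X = "\<Prod>i<k. a i ^ (?P i - r i)" and ?Y = "\<Prod>i<k. a' i ^ r i"
        and ?C = "\<Prod>j<m. t j powi (\<Sum>i<k. int (r i) * chi i j)" and ?TT = "\<Prod>j<m. (t j * t' j) powi Qf j u"
        and ?T1 = "\<Prod>j<m. t j powi Qf j (u1 u r)" and ?T2 = "\<Prod>j<m. t' j powi Qf j (u2 u r)"
        and ?b = "of_nat (bn k ?P r) :: 'K"
      have "?b * (?X * ?Y * ?C) * ?TT = ?b * ?X * ?Y * (?TT * ?C)" by (simp add: mult_ac)
      also have "\<dots> = ?b * ?X * ?Y * (?T1 * ?T2)" using 2 by simp
      also have "\<dots> = ?b * (?X * ?T1) * (?Y * ?T2)" by (simp add: mult_ac)
      also have "\<dots> = ?b * phi g (u1 u r) * phi h (u2 u r)"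
        using u1_S[OF u r] u2_S[OF u r] by (simp add: phi_def gat hat pn_u1[OF u r] pn_u2[OF r])
      finally show "?b * (\<Prod>i<k. a i ^ (?P i - r i) * (chr m (chi i) t * a' i) ^ r i) * ?TT
          = ?b * phi g (u1 u r) * phi h (u2 u r)"
        unfolding 1 .
    qed
    also have "\<dots> = mu (phi g) (phi h) u"
      using u by (simp add: mu_def)
    finally show ?thesis .
  qed
qed

lemma pn_L: "pn L = (\<lambda>_. 0)"
  by (auto simp: pn_def LB)
lemma pn_T: "j < m \<Longrightarrow> pn (T j) = (\<lambda>_. 0)"
  by (auto simp: pn_def T_Bk)
lemma pn_A: "i < k \<Longrightarrow> pn (A i) = (\<lambda>i'. if i' = i then 1 else 0)"
  by (auto simp: pn_def A_Bk)

lemma sumB_pn: "u \<in> S \<Longrightarrow> (\<Sum>i<k. ip n u (B i)) = int (\<Sum>i<k. pn u i)"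
  using B_pos by (simp add: pn_def)

definition Lt :: "(nat \<Rightarrow> 'K::field) \<Rightarrow> 'K" where
  "Lt t = (\<Prod>j<m. t j powi lam j)"

lemma Lt_nz: assumes g: "g \<in> gchi_pts k m" shows "Lt (snd g) \<noteq> 0"
  using gchi_ptsD[OF g] by (simp add: Lt_def)

lemma prod_powi_N: "(\<Prod>j<m. (t j :: 'K::field) powi (int c * lam j)) = Lt t ^ c"
  by (simp add: Lt_def prod_power_distrib power_int_power' mult.commute)

lemma phi_L: "phi g L = Lt (snd g)"
  using L_S by (simp add: phi_def pn_L Qf_L Lt_def)

lemma phi_T:
  assumes g: "g \<in> gchi_pts k m" and j: "j < m"
  shows "phi g (T j) = snd g j * Lt (snd g) ^ N"
proof -
  have "(\<Prod>j'<m. snd g j' powi Qf j' (T j)) = (\<Prod>j'<m. snd g j' powi (if j = j' then 1 else 0) * snd g j' powi (int N * lam j'))"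
    using j gchi_ptsD[OF g] by (intro prod.cong refl) (simp add: Qf_T power_int_add)
  also have "\<dots> = snd g j * Lt (snd g) ^ N"
    using j by (simp add: prod.distrib prod_powi_N if_distrib[of "\<lambda>e. _ powi e"] prod.delta cong: if_cong)
  finally show ?thesis using T_S[OF j] by (simp add: phi_def pn_T[OF j])
qed

lemma phi_A:
  assumes g: "g \<in> gchi_pts k m" and i: "i < k"
  shows "phi g (A i) = fst g i * Lt (snd g) ^ (2 * N)"
proof -
  have "(\<Prod>j<m. snd g j powi Qf j (A i)) = (\<Prod>j<m. snd g j powi (int (2 * N) * lam j))"
    using i by (intro prod.cong refl) (simp add: Qf_A)
  also have "\<dots> = Lt (snd g) ^ (2 * N)" by (rule prod_powi_N)
  finally have 1: "(\<Prod>j<m. snd g j powi Qf j (A i)) = Lt (snd g) ^ (2 * N)" .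
  have 2: "(\<Prod>i'<k. fst g i' ^ (if i' = i then 1 else 0)) = fst g i"
    using i by (simp add: if_distrib[of "\<lambda>e. _ ^ e"] prod.delta cong: if_cong)
  show ?thesis using A_S[OF i] by (simp add: phi_def pn_A[OF i] 1 2)
qed

definition one :: "(nat \<Rightarrow> 'K::field) \<times> (nat \<Rightarrow> 'K)" where
  "one = (\<lambda>_. 0, \<lambda>j. if j < m then 1 else 0)"

lemma one_gchi: "one \<in> gchi_pts k m"
  by (simp add: one_def gchi_pts_def)

lemma prod_zero_pow: "(\<Prod>i<k. (0::'K::field) ^ p i) = (if \<forall>i<k. p i = 0 then 1 else 0)"
  by (auto simp: power_0_left)

lemma phi_one: "phi one = e"
proof
  fix u show "phi one u = e u"
  proof (cases "u \<in> S")
    case False then show ?thesis by (simp add: phi_def e_def)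
  next
    case True
    have "\<forall>i<k. (pn u i = 0) = (ip n u (B i) = 0)"
    proof (intro allI impI)
      fix i assume "i < k"
      then show "(pn u i = 0) = (ip n u (B i) = 0)" using B_pos[OF True \<open>i < k\<close>] by (auto simp: pn_def)
    qed
    then have "(\<forall>i<k. pn u i = 0) \<longleftrightarrow> (\<forall>i<k. ip n u (B i) = 0)" by blast
    then show ?thesis using True by (simp add: phi_def e_def one_def prod_zero_pow)
  qed
qed

lemma chr_nz: "(\<And>j. j < m \<Longrightarrow> t j \<noteq> 0) \<Longrightarrow> chr m c t \<noteq> (0::'K::field)"
  by (simp add: chr_def)

lemma chr_inv: "chr m c (\<lambda>j. if j < m then inverse (t j) else 0) = inverse (chr m c (t :: nat \<Rightarrow> 'K::field))"
proof -
  have "chr m c (\<lambda>j. if j < m then inverse (t j) else 0) = (\<Prod>j<m. inverse (t j powi c j))"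
    unfolding chr_def by (intro prod.cong refl) (simp add: power_int_inverse)
  also have "\<dots> = inverse (chr m c t)"
    using prod_inversef[of "\<lambda>j. t j powi c j" "{..<m}"] by (simp add: chr_def comp_def)
  finally show ?thesis .
qed

definition ginv :: "(nat \<Rightarrow> 'K::field) \<times> (nat \<Rightarrow> 'K) \<Rightarrow> (nat \<Rightarrow> 'K) \<times> (nat \<Rightarrow> 'K)" where
  "ginv g = (\<lambda>i. if i < k then - fst g i / chr m (chi i) (snd g) else 0,
             \<lambda>j. if j < m then inverse (snd g j) else 0)"

lemma ginv_gchi: "g \<in> gchi_pts k m \<Longrightarrow> ginv g \<in> gchi_pts k m"
  by (auto simp: ginv_def gchi_pts_def)

lemma ginv_right:
  assumes g: "g \<in> gchi_pts k m"
  shows "gchi_mult k m chi g (ginv g) = one"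
proof -
  obtain a t where gat: "g = (a, t)" by (cases g)
  have t: "j < m \<Longrightarrow> t j \<noteq> 0" for j using gchi_ptsD[OF g] gat by auto
  have c: "chr m (chi i) t \<noteq> 0" for i using t chr_nz by blast
  have 1: "(\<lambda>i. if i < k then a i + chr m (chi i) t * (if i < k then - a i / chr m (chi i) t else 0) else 0) = (\<lambda>_. 0)"
  proof
    fix i show "(if i < k then a i + chr m (chi i) t * (if i < k then - a i / chr m (chi i) t else 0) else 0) = 0"
      using c[of i] by simp
  qed
  have 2: "(\<lambda>j. if j < m then t j * (if j < m then inverse (t j) else 0) else 0) = (\<lambda>j. if j < m then 1 else 0)"
  proof
    fix j show "(if j < m then t j * (if j < m then inverse (t j) else 0) else 0) = (if j < m then 1 else 0)"
      using t[of j] by simp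
  qed
  show ?thesis unfolding gat gchi_mult_def ginv_def one_def fst_conv snd_conv prod.case using 1 2 by simp
qed

lemma ginv_left:
  assumes g: "g \<in> gchi_pts k m"
  shows "gchi_mult k m chi (ginv g) g = one"
proof -
  obtain a t where gat: "g = (a, t)" by (cases g)
  have t: "j < m \<Longrightarrow> t j \<noteq> 0" for j using gchi_ptsD[OF g] gat by auto
  have c: "chr m (chi i) t \<noteq> 0" for i using t chr_nz by blast
  have ci: "chr m (chi i) (\<lambda>j. if j < m then inverse (t j) else 0) = inverse (chr m (chi i) t)" for i
    by (rule chr_inv)
  have 1: "(\<lambda>i. if i < k then (if i < k then - a i / chr m (chi i) t else 0)
       + chr m (chi i) (\<lambda>j. if j < m then inverse (t j) else 0) * a i else 0) = (\<lambda>_. 0)"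
  proof
    fix i show "(if i < k then (if i < k then - a i / chr m (chi i) t else 0)
       + chr m (chi i) (\<lambda>j. if j < m then inverse (t j) else 0) * a i else 0) = 0"
      unfolding ci using c[of i] by (simp add: divide_inverse mult.commute)
  qed
  have 2: "(\<lambda>j. if j < m then (if j < m then inverse (t j) else 0) * t j else 0) = (\<lambda>j. if j < m then 1 else 0)"
  proof
    fix j show "(if j < m then (if j < m then inverse (t j) else 0) * t j else 0) = (if j < m then 1 else 0)"
      using t[of j] by simp
  qed
  show ?thesis unfolding gat gchi_mult_def ginv_def one_def fst_conv snd_conv prod.case using 1 2 by simp
qed

lemma mu_pn0:
  assumes "w \<in> S" "pn w = (\<lambda>_. 0)"
  shows "mu x y w = x w * y w"
  using assms u2_pn[OF assms(1)] by (simp add: mu_def Rk_zero_set bn_def u1_zero)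

lemma e_pn0:
  assumes w: "w \<in> S" "pn w = (\<lambda>_. 0)"
  shows "e w = 1"
proof -
  have "ip n w (B i) = 0" if "i < k" for i
    using fun_cong[OF w(2), of i] B_pos[OF w(1) that] that by (simp add: pn_def)
  then show ?thesis using w(1) by (simp add: e_def)
qed

lemma unit_nz:
  assumes x: "x \<in> monoid_units S mu e" and w: "w \<in> S" "pn w = (\<lambda>_. 0)"
  shows "x w \<noteq> 0"
proof -
  obtain y where "mu x y = e" using x by (auto simp: monoid_units_def)
  then have "x w * y w = 1" using mu_pn0[OF w] e_pn0[OF w] by metis
  then show ?thesis by auto
qed

lemma phi_units:
  assumes g: "g \<in> gchi_pts k m"
  shows "phi g \<in> monoid_units S mu e"
proof -
  have 1: "mu (phi g) (phi (ginv g)) = e"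
    using phi_hom[OF g ginv_gchi[OF g]] ginv_right[OF g] phi_one by metis
  have 2: "mu (phi (ginv g)) (phi g) = e"
    using phi_hom[OF ginv_gchi[OF g] g] ginv_left[OF g] phi_one by metis
  show ?thesis unfolding monoid_units_def
    using phi_pts[OF g] phi_pts[OF ginv_gchi[OF g]] 1 2 by blast
qed

lemma expand_split: "u \<in> lat n \<Longrightarrow> u l = (\<Sum>i<k. ip n u (B i) * D i l) + (\<Sum>j<m. ip n u (B (k+j)) * D (k+j) l)"
  using fun_cong[OF expand[of u], of l] sum_split_k[OF k_le] by simp

lemma pts_smult: "x \<in> toric_pts S \<Longrightarrow> w \<in> S \<Longrightarrow> (\<lambda>l. int c * w l) \<in> S \<and> x (\<lambda>l. int c * w l) = x w ^ c"
proof (induction c)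
  case 0 then show ?case using zero_S pts_zero by simp
next
  case (Suc c)
  have e: "(\<lambda>l. int (Suc c) * w l) = (\<lambda>l. w l + int c * w l)" by (simp add: algebra_simps)
  show ?case using Suc add_S pts_mult[OF Suc.prems(1)] unfolding e by simp
qed

lemma pts_combo:
  assumes x: "x \<in> toric_pts S" and I: "finite I" and w: "\<And>i. i \<in> I \<Longrightarrow> w i \<in> S"
  shows "(\<lambda>l. \<Sum>i\<in>I. int (c i) * w i l) \<in> S \<and> x (\<lambda>l. \<Sum>i\<in>I. int (c i) * w i l) = (\<Prod>i\<in>I. x (w i) ^ c i)"
  using I w
proof (induction I rule: finite_induct)
  case empty then show ?case using zero_S pts_zero[OF x] by simp
next
  case (insert i I)
  have e: "(\<lambda>l. \<Sum>i\<in>insert i I. int (c i) * w i l) = (\<lambda>l. int (c i) * w i l + (\<Sum>i\<in>I. int (c i) * w i l))"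
    using insert by simp
  have "(\<lambda>l. int (c i) * w i l) \<in> S" "x (\<lambda>l. int (c i) * w i l) = x (w i) ^ c i"
    using pts_smult[OF x, of "w i" "c i"] insert by auto
  then show ?case unfolding e using insert add_S pts_mult[OF x] by simp
qed

definition qq :: "(nat \<Rightarrow> int) \<Rightarrow> nat \<Rightarrow> int" where "qq u j = ip n u (B (k+j))"

lemma rep:
  assumes x: "x \<in> toric_pts S" and u: "u \<in> S"
  shows "x u * (\<Prod>j<m. x (T j) ^ nat (- qq u j)) * x L ^ (N * ((\<Sum>i<k. pn u i) + (\<Sum>j<m. nat (qq u j))))
       = (\<Prod>i<k. x (A i) ^ pn u i) * (\<Prod>j<m. x (T j) ^ nat (qq u j)) * x L ^ (N * (\<Sum>j<m. nat (- qq u j)))"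
proof -
  define qp where "qp j = nat (qq u j)" for j
  define qm where "qm j = nat (- qq u j)" for j
  define C1 where "C1 = (\<lambda>l. \<Sum>j<m. int (qm j) * T j l)"
  define C2 where "C2 = (\<lambda>l. int (N * ((\<Sum>i<k. pn u i) + (\<Sum>j<m. qp j))) * L l)"
  define C3 where "C3 = (\<lambda>l. \<Sum>i<k. int (pn u i) * A i l)"
  define C4 where "C4 = (\<lambda>l. \<Sum>j<m. int (qp j) * T j l)"
  define C5 where "C5 = (\<lambda>l. int (N * (\<Sum>j<m. qm j)) * L l)"
  have ulat: "u \<in> lat n" using S_lat[OF u] .
  have pB: "i < k \<Longrightarrow> ip n u (B i) = int (pn u i)" for i using B_pos[OF u] by (simp add: pn_def)
  have qd: "qq u j = int (qp j) - int (qm j)" for j by (simp add: qp_def qm_def)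
  have VI: "(\<lambda>l. u l + (C1 l + C2 l)) = (\<lambda>l. C3 l + C4 l + C5 l)"
  proof
    fix l
    have ul: "u l = (\<Sum>i<k. int (pn u i) * D i l) + (\<Sum>j<m. int (qp j) * D (k+j) l) - (\<Sum>j<m. int (qm j) * D (k+j) l)"
      unfolding expand_split[OF ulat, of l] qq_def[symmetric] qd
      by (simp add: pB left_diff_distrib sum_subtractf)
    show "u l + (C1 l + C2 l) = C3 l + C4 l + C5 l"
      unfolding C1_def C2_def C3_def C4_def C5_def A_def T_def sum_DN ul
      by (simp add: algebra_simps of_nat_sum)
  qed
  have S1: "C1 \<in> S" "x C1 = (\<Prod>j<m. x (T j) ^ qm j)"
    using pts_combo[OF x, of "{..<m}" T qm] T_S unfolding C1_def by auto
  have S2: "C2 \<in> S" "x C2 = x L ^ (N * ((\<Sum>i<k. pn u i) + (\<Sum>j<m. qp j)))"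
    using pts_smult[OF x L_S, of "N * ((\<Sum>i<k. pn u i) + (\<Sum>j<m. qp j))"] unfolding C2_def by auto
  have S3: "C3 \<in> S" "x C3 = (\<Prod>i<k. x (A i) ^ pn u i)"
    using pts_combo[OF x, of "{..<k}" A "pn u"] A_S unfolding C3_def by auto
  have S4: "C4 \<in> S" "x C4 = (\<Prod>j<m. x (T j) ^ qp j)"
    using pts_combo[OF x, of "{..<m}" T qp] T_S unfolding C4_def by auto
  have S5: "C5 \<in> S" "x C5 = x L ^ (N * (\<Sum>j<m. qm j))"
    using pts_smult[OF x L_S, of "N * (\<Sum>j<m. qm j)"] unfolding C5_def by auto
  have "x (\<lambda>l. u l + (C1 l + C2 l)) = x u * (x C1 * x C2)"
    using pts_mult[OF x] u S1 S2 add_S by simp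
  moreover have "x (\<lambda>l. C3 l + C4 l + C5 l) = x C3 * x C4 * x C5"
    using pts_mult[OF x] S3 S4 S5 add_S by simp
  ultimately have "x u * (x C1 * x C2) = x C3 * x C4 * x C5" using VI by simp
  then show ?thesis using S1 S2 S3 S4 S5 by (simp add: qp_def qm_def mult.assoc)
qed

lemma units_phi:
  assumes x: "x \<in> monoid_units S mu e"
  shows "\<exists>g\<in>gchi_pts k m. x = phi g"
proof -
  have xp: "x \<in> toric_pts S" using x by (simp add: monoid_units_def)
  define Lx where "Lx = x L"
  have Lx: "Lx \<noteq> 0" unfolding Lx_def using unit_nz[OF x L_S pn_L] .
  have xT: "j < m \<Longrightarrow> x (T j) \<noteq> 0" for j using unit_nz[OF x T_S pn_T] .
  define t where "t j = (if j < m then x (T j) / Lx ^ N else 0)" for j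
  define a where "a i = (if i < k then x (A i) / Lx ^ (2 * N) else 0)" for i
  have t0: "j < m \<Longrightarrow> t j \<noteq> 0" for j using xT Lx by (simp add: t_def)
  have g: "(a, t) \<in> gchi_pts k m" using t0 by (auto simp: gchi_pts_def a_def t_def)
  have xTt: "j < m \<Longrightarrow> x (T j) = t j * Lx ^ N" for j using Lx by (simp add: t_def)
  have xAa: "i < k \<Longrightarrow> x (A i) = a i * Lx ^ (2 * N)" for i using Lx by (simp add: a_def)
  have main: "x u = (\<Prod>i<k. a i ^ pn u i) * (\<Prod>j<m. t j powi qq u j) * Lx ^ (N * (\<Sum>i<k. pn u i))"
    if u: "u \<in> S" for u
  proof (rule alg_step[OF Lx, where J="{..<m}" and I="{..<k}" and qp="\<lambda>j. nat (qq u j)" and qm="\<lambda>j. nat (- qq u j)"])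
    show "\<And>j. j \<in> {..<m} \<Longrightarrow> t j \<noteq> 0" using t0 by auto
    have "(\<Prod>j<m. x (T j) ^ nat (- qq u j)) = (\<Prod>j<m. (t j * Lx ^ N) ^ nat (- qq u j))"
      by (intro prod.cong refl) (simp add: xTt)
    moreover have "(\<Prod>j<m. x (T j) ^ nat (qq u j)) = (\<Prod>j<m. (t j * Lx ^ N) ^ nat (qq u j))"
      by (intro prod.cong refl) (simp add: xTt)
    moreover have "(\<Prod>i<k. x (A i) ^ pn u i) = (\<Prod>i<k. (a i * Lx ^ (2 * N)) ^ pn u i)"
      by (intro prod.cong refl) (simp add: xAa)
    ultimately show "x u * (\<Prod>j<m. (t j * Lx ^ N) ^ nat (- qq u j)) * Lx ^ (N * ((\<Sum>i<k. pn u i) + (\<Sum>j<m. nat (qq u j))))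
       = (\<Prod>i<k. (a i * Lx ^ (2 * N)) ^ pn u i) * (\<Prod>j<m. (t j * Lx ^ N) ^ nat (qq u j)) * Lx ^ (N * (\<Sum>j<m. nat (- qq u j)))"
      using rep[OF xp u] unfolding Lx_def by simp
  qed auto
  have LxLt: "Lx = Lt t"
    using main[OF L_S] by (simp add: pn_L Lx_def[symmetric] Lt_def qq_def lam_def)
  have "x = phi (a, t)"
  proof
    fix u show "x u = phi (a, t) u"
    proof (cases "u \<in> S")
      case False then show ?thesis using pts_out[OF xp] by (simp add: phi_def)
    next
      case u: True
      have "(\<Prod>j<m. t j powi Qf j u) = (\<Prod>j<m. t j powi qq u j * t j powi (int (N * (\<Sum>i<k. pn u i)) * lam j))"
        using t0 by (intro prod.cong refl) (simp add: Qf_def qq_def sumB_pn[OF u] power_int_add[symmetric] mult_ac)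
      also have "\<dots> = (\<Prod>j<m. t j powi qq u j) * (\<Prod>j<m. t j powi (int (N * (\<Sum>i<k. pn u i)) * lam j))"
        by (simp only: prod.distrib)
      also have "\<dots> = (\<Prod>j<m. t j powi qq u j) * Lx ^ (N * (\<Sum>i<k. pn u i))"
        by (simp only: prod_powi_N LxLt)
      finally show ?thesis using u main[OF u] by (simp add: phi_def mult.assoc)
    qed
  qed
  then show ?thesis using g by blast
qed

lemma phi_inj: "inj_on phi (gchi_pts k m)"
proof (rule inj_onI)
  fix g g' assume g: "g \<in> gchi_pts k m" and g': "g' \<in> gchi_pts k m" and eq: "phi g = phi g'"
  have L: "Lt (snd g) = Lt (snd g')" using eq phi_L by metis
  have 1: "snd g = snd g'"
  proof
    fix j show "snd g j = snd g' j"
    proof (cases "j < m")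
      case True
      then have "snd g j * Lt (snd g) ^ N = snd g' j * Lt (snd g) ^ N"
        using eq phi_T[OF g True] phi_T[OF g' True] L by metis
      then show ?thesis using Lt_nz[OF g] by simp
    next
      case False then show ?thesis using g g' by (auto simp: gchi_pts_def)
    qed
  qed
  have 2: "fst g = fst g'"
  proof
    fix i show "fst g i = fst g' i"
    proof (cases "i < k")
      case True
      then have "fst g i * Lt (snd g) ^ (2 * N) = fst g' i * Lt (snd g) ^ (2 * N)"
        using eq phi_A[OF g True] phi_A[OF g' True] L by metis
      then show ?thesis using Lt_nz[OF g] by simp
    next
      case False then show ?thesis using g g' by (auto simp: gchi_pts_def)
    qed
  qed
  show "g = g'" using 1 2 by (simp add: prod_eq_iff)
qed

lemma mu_regular: "u \<in> S \<Longrightarrow> toric_regular2 S (\<lambda>x y. (mu :: ((nat \<Rightarrow> int) \<Rightarrow> 'K::field) \<Rightarrow> _ \<Rightarrow> _) x y u)"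
  unfolding toric_regular2_def
proof (intro exI conjI ballI)
  assume u: "u \<in> S"
  let ?F = "(\<lambda>r. (u1 u r, u2 u r)) ` Rk k (pn u)"
  let ?c = "\<lambda>(a::nat \<Rightarrow> int, b::nat \<Rightarrow> int). (of_nat (bn k (pn u) (pn b)) :: 'K)"
  show "finite ?F" by (simp add: finite_Rk)
  show "?F \<subseteq> S \<times> S" using u1_S[OF u] u2_S[OF u] by auto
  have inj: "inj_on (\<lambda>r. (u1 u r, u2 u r)) (Rk k (pn u))"
    by (rule inj_onI) (metis pn_u2 prod.inject)
  fix x y :: "(nat \<Rightarrow> int) \<Rightarrow> 'K"
  show "mu x y u = (\<Sum>(a, b)\<in>?F. ?c (a, b) * x a * y b)"
    using u by (simp add: sum.reindex[OF inj] mu_def pn_u2)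
qed

lemma monoid_ok: "monoid_structure S (mu :: ((nat \<Rightarrow> int) \<Rightarrow> 'K::field) \<Rightarrow> _ \<Rightarrow> _) e"
  unfolding monoid_structure_def
  using e_pts mu_pts mu_regular mu_assoc mu_e_left mu_e_right by auto

lemma phi_gchi_regular: "gchi_regular k m (\<lambda>g. phi g u)"
  unfolding gchi_regular_def
proof (cases "u \<in> S")
  case True
  show "\<exists>F c. finite F \<and> F \<subseteq> {(p, q). (\<forall>i\<ge>k. p i = 0) \<and> (\<forall>j\<ge>m. q j = 0)} \<and>
      (\<forall>(a, t)\<in>gchi_pts k m. phi (a, t) u = (\<Sum>(p, q)\<in>F. c (p, q) * (\<Prod>i<k. a i ^ p i) * (\<Prod>j<m. t j powi q j)))"
  proof (intro exI conjI)
    show "finite {(pn u, \<lambda>j. if j < m then Qf j u else 0)}" by simp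
    show "{(pn u, \<lambda>j. if j < m then Qf j u else 0)} \<subseteq> {(p, q). (\<forall>i\<ge>k. p i = 0) \<and> (\<forall>j\<ge>m. q j = 0)}"
      by (auto simp: pn_def)
    show "\<forall>(a, t)\<in>gchi_pts k m. phi (a, t) u = (\<Sum>(p, q)\<in>{(pn u, \<lambda>j. if j < m then Qf j u else 0)}.
        (\<lambda>_. 1) (p, q) * (\<Prod>i<k. a i ^ p i) * (\<Prod>j<m. t j powi q j))"
      using True by (auto simp: phi_def intro!: prod.cong)
  qed
next
  case False
  show "\<exists>F c. finite F \<and> F \<subseteq> {(p, q). (\<forall>i\<ge>k. p i = 0) \<and> (\<forall>j\<ge>m. q j = 0)} \<and>
      (\<forall>(a, t)\<in>gchi_pts k m. phi (a, t) u = (\<Sum>(p, q)\<in>F. c (p, q) * (\<Prod>i<k. a i ^ p i) * (\<Prod>j<m. t j powi q j)))"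
    by (rule exI[of _ "{}"]) (use False in \<open>simp add: phi_def\<close>)
qed

lemma phi_bij: "bij_betw phi (gchi_pts k m) (monoid_units S mu e)"
  unfolding bij_betw_def
  using phi_inj phi_units units_phi by blast

lemma char_reg: "w \<in> S \<Longrightarrow> toric_regular S (\<lambda>x. x w)"
  unfolding toric_regular_def
  by (rule exI[of _ "{w}"], rule exI[of _ "\<lambda>_. 1"]) simp

lemma inv_coords:
  assumes q: "q \<in> monoid_units S (mu :: ((nat \<Rightarrow> int) \<Rightarrow> 'K::field) \<Rightarrow> _ \<Rightarrow> _) e"
  defines "g0 \<equiv> inv_into (gchi_pts k m) phi q"
  shows "g0 \<in> gchi_pts k m" "phi g0 = q"
proof -
  have "q \<in> phi ` gchi_pts k m" using units_phi[OF q] by blast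
  then show "g0 \<in> gchi_pts k m" "phi g0 = q" unfolding g0_def
    by (auto intro: inv_into_into f_inv_into_f)
qed

lemma loc_reg_a:
  assumes i: "i < k"
  shows "loc_regular S (monoid_units S (mu :: ((nat \<Rightarrow> int) \<Rightarrow> 'K::field) \<Rightarrow> _ \<Rightarrow> _) e)
     (\<lambda>x. fst (inv_into (gchi_pts k m) phi x) i)"
  unfolding loc_regular_def
proof (intro ballI)
  fix p assume p: "p \<in> monoid_units S (mu :: ((nat \<Rightarrow> int) \<Rightarrow> 'K::field) \<Rightarrow> _ \<Rightarrow> _) e"
  define w where "w = (\<lambda>l. int (2 * N) * L l)"
  have w: "w \<in> S" "\<And>x. x \<in> toric_pts S \<Longrightarrow> x w = x L ^ (2 * N)"
    using pts_smult[OF e_pts L_S, of "2 * N"] pts_smult[OF _ L_S, of _ "2 * N"] unfolding w_def by auto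
  have pp: "p \<in> toric_pts S" using p by (simp add: monoid_units_def)
  show "\<exists>g h. toric_regular S g \<and> toric_regular S h \<and> h p \<noteq> 0 \<and>
      (\<forall>q\<in>monoid_units S mu e. h q \<noteq> 0 \<longrightarrow> fst (inv_into (gchi_pts k m) phi q) i * h q = g q)"
  proof (intro exI conjI ballI impI)
    show "toric_regular S (\<lambda>x. x (A i))" using char_reg A_S[OF i] .
    show "toric_regular S (\<lambda>x. x w)" using char_reg w(1) .
    show "p w \<noteq> 0" using w(2)[OF pp] unit_nz[OF p L_S pn_L] by simp
    fix q assume q: "q \<in> monoid_units S (mu :: ((nat \<Rightarrow> int) \<Rightarrow> 'K::field) \<Rightarrow> _ \<Rightarrow> _) e"
    have qq: "q \<in> toric_pts S" using q by (simp add: monoid_units_def)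
    note g0 = inv_coords[OF q]
    show "fst (inv_into (gchi_pts k m) phi q) i * q w = q (A i)"
      using phi_A[OF g0(1) i] phi_L[of "inv_into (gchi_pts k m) phi q"] w(2)[OF qq] g0(2) by simp
  qed
qed

lemma loc_reg_t:
  assumes j: "j < m"
  shows "loc_regular S (monoid_units S (mu :: ((nat \<Rightarrow> int) \<Rightarrow> 'K::field) \<Rightarrow> _ \<Rightarrow> _) e)
     (\<lambda>x. snd (inv_into (gchi_pts k m) phi x) j)"
  unfolding loc_regular_def
proof (intro ballI)
  fix p assume p: "p \<in> monoid_units S (mu :: ((nat \<Rightarrow> int) \<Rightarrow> 'K::field) \<Rightarrow> _ \<Rightarrow> _) e"
  define w where "w = (\<lambda>l. int N * L l)"
  have w: "w \<in> S" "\<And>x. x \<in> toric_pts S \<Longrightarrow> x w = x L ^ N"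
    using pts_smult[OF e_pts L_S, of N] pts_smult[OF _ L_S, of _ N] unfolding w_def by auto
  have pp: "p \<in> toric_pts S" using p by (simp add: monoid_units_def)
  show "\<exists>g h. toric_regular S g \<and> toric_regular S h \<and> h p \<noteq> 0 \<and>
      (\<forall>q\<in>monoid_units S mu e. h q \<noteq> 0 \<longrightarrow> snd (inv_into (gchi_pts k m) phi q) j * h q = g q)"
  proof (intro exI conjI ballI impI)
    show "toric_regular S (\<lambda>x. x (T j))" using char_reg T_S[OF j] .
    show "toric_regular S (\<lambda>x. x w)" using char_reg w(1) .
    show "p w \<noteq> 0" using w(2)[OF pp] unit_nz[OF p L_S pn_L] by simp
    fix q assume q: "q \<in> monoid_units S (mu :: ((nat \<Rightarrow> int) \<Rightarrow> 'K::field) \<Rightarrow> _ \<Rightarrow> _) e"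
    have qq: "q \<in> toric_pts S" using q by (simp add: monoid_units_def)
    note g0 = inv_coords[OF q]
    show "snd (inv_into (gchi_pts k m) phi q) j * q w = q (T j)"
      using phi_T[OF g0(1) j] phi_L[of "inv_into (gchi_pts k m) phi q"] w(2)[OF qq] g0(2) by simp
  qed
qed

lemma locale_main:
  "\<exists>(mu' :: ((nat \<Rightarrow> int) \<Rightarrow> 'K::field) \<Rightarrow> ((nat \<Rightarrow> int) \<Rightarrow> 'K) \<Rightarrow> ((nat \<Rightarrow> int) \<Rightarrow> 'K)) e'.
      monoid_structure S mu' e' \<and> units_iso_gchi S mu' e' k m chi"
proof (intro exI conjI)
  show "monoid_structure S (mu :: ((nat \<Rightarrow> int) \<Rightarrow> 'K::field) \<Rightarrow> _ \<Rightarrow> _) e" by (rule monoid_ok)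
  show "units_iso_gchi S (mu :: ((nat \<Rightarrow> int) \<Rightarrow> 'K::field) \<Rightarrow> _ \<Rightarrow> _) e k m chi"
    unfolding units_iso_gchi_def
    using phi_bij phi_hom phi_gchi_regular loc_reg_a loc_reg_t by blast
qed

end

lemma of_int_ip: "(of_int (ip n u v) :: rat) = (\<Sum>i<n. of_int (u i) * of_int (v i))"
  by (simp add: ip_def)

lemma zbasis_inj:
  assumes zb: "zbasis n B"
  shows "inj_on B {..<n}"
proof (rule inj_onI, rule ccontr)
  fix i i' assume i: "i \<in> {..<n}" and i': "i' \<in> {..<n}" and eq: "B i = B i'" and ne: "i \<noteq> i'"
  define c where "c x = (if x = i then 1 else if x = i' then -1 else (0::int))" for x
  have "(\<lambda>j. \<Sum>x<n. c x * B x j) = (\<lambda>j. 0)"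
  proof
    fix j
    have "(\<Sum>x<n. c x * B x j) = (\<Sum>x<n. (if x = i then B i j else 0) - (if x = i' then B i' j else 0))"
      using ne by (intro sum.cong refl) (auto simp: c_def)
    also have "\<dots> = 0" using i i' eq by (simp add: sum_subtractf)
    finally show "(\<Sum>x<n. c x * B x j) = 0" .
  qed
  then have "c i = 0" using zb i unfolding zbasis_def by blast
  then show False by (simp add: c_def)
qed

lemma dual_basis:
  assumes zb: "zbasis n B"
  shows "\<exists>D. (\<forall>i<n. D i \<in> lat n) \<and> (\<forall>i<n. \<forall>j<n. ip n (D i) (B j) = (if i = j then 1 else 0))
           \<and> (\<forall>u\<in>lat n. u = (\<lambda>l. \<Sum>j<n. ip n u (B j) * D j l))"
proof -
  have Blat: "\<And>i. i < n \<Longrightarrow> B i \<in> lat n" and span: "\<And>w. w \<in> lat n \<Longrightarrow> \<exists>c. w = (\<lambda>j. \<Sum>i<n. c i * B i j)"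
    and ind: "\<And>c. (\<lambda>j. \<Sum>i<n. c i * B i j) = (\<lambda>j. 0) \<Longrightarrow> \<forall>i<n. c i = 0"
    using zb unfolding zbasis_def by blast+
  define C where "C l = (SOME c. (\<lambda>j. if j = l then 1 else 0::int) = (\<lambda>j. \<Sum>i<n. c i * B i j))" for l
  have Ce: "(if j = l then 1 else 0) = (\<Sum>i<n. C l i * B i j)" if "l < n" for l j
  proof -
    have "(\<lambda>j. if j = l then 1 else 0::int) \<in> lat n" using that by (simp add: lat_def)
    then have "(\<lambda>j. if j = l then 1 else 0::int) = (\<lambda>j. \<Sum>i<n. C l i * B i j)"
      unfolding C_def by (rule someI_ex[OF span])
    from fun_cong[OF this, of j] show ?thesis by simp
  qed
  define D where "D i = (\<lambda>l. if l < n then C l i else 0)" for i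
  have Dlat: "\<forall>i<n. D i \<in> lat n" by (simp add: D_def lat_def)
  have DB: "ip n (D i) (B j) = (if i = j then 1 else 0)" if i: "i < n" and j: "j < n" for i j
  proof -
    define c where "c i' = (\<Sum>l<n. B j l * C l i') - (if i' = j then 1 else 0)" for i'
    have "(\<lambda>j'. \<Sum>i'<n. c i' * B i' j') = (\<lambda>j'. 0)"
    proof
      fix j'
      have "(\<Sum>i'<n. (\<Sum>l<n. B j l * C l i') * B i' j') = (\<Sum>l<n. B j l * (\<Sum>i'<n. C l i' * B i' j'))"
        by (simp only: sum_distrib_right sum_distrib_left mult.assoc) (rule sum.swap)
      also have "\<dots> = (\<Sum>l<n. B j l * (if j' = l then 1 else 0))"
        by (intro sum.cong refl) (simp add: Ce)
      also have "\<dots> = B j j'"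
        using Blat[OF j] by (auto simp: lat_def if_distrib[of "\<lambda>x. B j _ * x"] sum.delta' cong: if_cong)
      finally have 1: "(\<Sum>i'<n. (\<Sum>l<n. B j l * C l i') * B i' j') = B j j'" .
      have 2: "(\<Sum>i'<n. (if i' = j then 1 else 0) * B i' j') = B j j'"
        using j by (simp add: if_distrib[of "\<lambda>x. x * _"] sum.delta' cong: if_cong)
      show "(\<Sum>i'<n. c i' * B i' j') = 0"
        unfolding c_def left_diff_distrib sum_subtractf 1 2 by simp
    qed
    then have "c i = 0" using ind i by blast
    then show ?thesis using i by (simp add: c_def ip_def D_def mult.commute)
  qed
  have exp: "u = (\<lambda>l. \<Sum>j<n. ip n u (B j) * D j l)" if u: "u \<in> lat n" for u
  proof
    fix l
    show "u l = (\<Sum>j<n. ip n u (B j) * D j l)"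
    proof (cases "l < n")
      case False then show ?thesis using u by (simp add: lat_def D_def)
    next
      case True
      have "(\<Sum>j<n. ip n u (B j) * D j l) = (\<Sum>j<n. \<Sum>l'<n. u l' * B j l' * C l j)"
        using True by (simp add: ip_def D_def sum_distrib_right)
      also have "\<dots> = (\<Sum>l'<n. u l' * (\<Sum>j<n. C l j * B j l'))"
        by (simp only: sum_distrib_left, subst sum.swap, simp add: mult_ac)
      also have "\<dots> = (\<Sum>l'<n. u l' * (if l' = l then 1 else 0))"
        using True by (intro sum.cong refl) (simp add: Ce[symmetric])
      also have "\<dots> = u l" using True by (simp add: if_distrib[of "\<lambda>x. u _ * x"] sum.delta' cong: if_cong)
      finally show ?thesis by simp
    qed
  qed
  show ?thesis using Dlat DB exp by blast
qed

lemma int_scale: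
  fixes uq :: "nat \<Rightarrow> rat"
  shows "\<exists>L (d::int). d > 0 \<and> L \<in> lat n \<and> (\<forall>i<n. of_int (L i) = of_int d * uq i)"
proof -
  define num where "num i = fst (quotient_of (uq i))" for i
  define den where "den i = snd (quotient_of (uq i))" for i
  have den: "den i > 0" for i unfolding den_def by (rule quotient_of_denom_pos') 
  have uq: "uq i = of_int (num i) / of_int (den i)" for i
    unfolding num_def den_def by (rule quotient_of_div) simp
  define d where "d = (\<Prod>i<n. den i)"
  define L where "L i = (if i < n then num i * (\<Prod>i'\<in>{..<n}-{i}. den i') else 0)" for i
  have "d > 0" unfolding d_def using den by (simp add: prod_pos)
  moreover have "L \<in> lat n" by (simp add: L_def lat_def)
  moreover have "of_int (L i) = of_int d * uq i" if i: "i < n" for i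
  proof -
    have "d = den i * (\<Prod>i'\<in>{..<n}-{i}. den i')" unfolding d_def using i
      by (simp add: prod.remove)
    then show ?thesis using i den[of i] by (simp add: L_def uq field_simps)
  qed
  ultimately show ?thesis by blast
qed

lemma sum_swap_mult:
  fixes a :: "nat \<Rightarrow> rat"
  shows "(\<Sum>j\<in>J. a j * (\<Sum>x\<in>X. c x * b x j)) = (\<Sum>x\<in>X. c x * (\<Sum>j\<in>J. a j * b x j))"
proof -
  have "(\<Sum>j\<in>J. a j * (\<Sum>x\<in>X. c x * b x j)) = (\<Sum>j\<in>J. \<Sum>x\<in>X. c x * (a j * b x j))"
    by (simp add: sum_distrib_left mult.left_commute)
  also have "\<dots> = (\<Sum>x\<in>X. \<Sum>j\<in>J. c x * (a j * b x j))" by (rule sum.swap)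
  also have "\<dots> = (\<Sum>x\<in>X. c x * (\<Sum>j\<in>J. a j * b x j))" by (simp add: sum_distrib_left)
  finally show ?thesis .
qed

theorem mainTheorem3:
  fixes n k :: nat and V :: "(nat \<Rightarrow> int) set" and F :: "(nat \<Rightarrow> rat) set"
    and chi :: "nat \<Rightarrow> nat \<Rightarrow> int"
  assumes "alg_closed TYPE('K::field_char_0)"
    and "finite V" and "V \<subseteq> lat n"
    and "strongly_convex (qcone V)"
    and "is_face n (qcone V) F"
    and "regular_face n F k"
  shows "\<exists>(mu :: ((nat \<Rightarrow> int) \<Rightarrow> 'K) \<Rightarrow> ((nat \<Rightarrow> int) \<Rightarrow> 'K) \<Rightarrow> ((nat \<Rightarrow> int) \<Rightarrow> 'K)) e.
            monoid_structure (dual_monoid n V) mu e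
          \<and> units_iso_gchi (dual_monoid n V) mu e k (n - k) chi"
proof -
  have finV: "finite V" and Vlat: "V \<subseteq> lat n" using assms by auto
  from assms(6) obtain B where kn: "k \<le> n" and zb: "zbasis n B" and FB: "F = qcone (B ` {..<k})"
    unfolding regular_face_def by blast
  from assms(5) obtain uq where uq_nn: "\<forall>x\<in>qcone V. 0 \<le> (\<Sum>i<n. uq i * x i)"
    and Fdef: "F = {x \<in> qcone V. (\<Sum>i<n. uq i * x i) = 0}"
    unfolding is_face_def by blast
  have Blat: "\<And>i. i < n \<Longrightarrow> B i \<in> lat n" using zb unfolding zbasis_def by blast
  from dual_basis[OF zb] obtain D where Dlat: "\<forall>i<n. D i \<in> lat n"
    and DB: "\<forall>i<n. \<forall>j<n. ip n (D i) (B j) = (if i = j then 1 else 0)"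
    and exp: "\<forall>u\<in>lat n. u = (\<lambda>l. \<Sum>j<n. ip n u (B j) * D j l)" by blast
  from int_scale[of n uq] obtain L d where d: "d > 0" and Llat: "L \<in> lat n"
    and Lq: "\<forall>i<n. of_int (L i) = of_int d * uq i" by blast
  define vq where "vq v = (\<lambda>i. of_int (v i) :: rat)" for v :: "nat \<Rightarrow> int"
  have ipL: "of_int (ip n L v) = of_int d * (\<Sum>i<n. uq i * vq v i)" for v
    unfolding of_int_ip vq_def sum_distrib_left using Lq by (intro sum.cong refl) simp
  have vV: "vq v \<in> qcone V" if "v \<in> V" for v
    unfolding qcone_def
  proof (intro CollectI exI[of _ "\<lambda>w. if w = v then 1 else 0"] conjI ballI)
    show "vq v = (\<lambda>i. \<Sum>w\<in>V. (if w = v then 1 else 0) * of_int (w i))"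
      using that finV by (simp add: vq_def if_distrib[of "\<lambda>x. x * _"] sum.delta' cong: if_cong)
  qed simp
  have BF: "vq (B i) \<in> F" if "i < k" for i
    unfolding FB qcone_def
  proof (intro CollectI exI[of _ "\<lambda>w. if w = B i then 1 else 0"] conjI ballI)
    show "vq (B i) = (\<lambda>j. \<Sum>w\<in>B ` {..<k}. (if w = B i then 1 else 0) * of_int (w j))"
      using that by (simp add: vq_def if_distrib[of "\<lambda>x. x * _"] sum.delta' cong: if_cong)
  qed simp
  have BC: "vq (B i) \<in> qcone V" and Bz: "(\<Sum>j<n. uq j * vq (B i) j) = 0" if "i < k" for i
    using BF[OF that] Fdef by auto
  have LB: "ip n L (B i) = 0" if "i < k" for i
    using ipL[of "B i"] Bz[OF that] by simp
  have Lpos: "0 \<le> ip n L v" if "v \<in> V" for v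
  proof -
    have "0 \<le> (of_int d :: rat) * (\<Sum>i<n. uq i * vq v i)"
      using d uq_nn vV[OF that] by simp
    then show ?thesis using ipL[of v] by simp
  qed
  have injB: "inj_on B {..<k}" using inj_on_subset[OF zbasis_inj[OF zb], of "{..<k}"] kn by auto
  have Vc: "1 \<le> ip n L v \<or> ((\<forall>i<k. 0 \<le> ip n (D i) v) \<and> (\<forall>w. ip n w v = (\<Sum>i<k. ip n (D i) v * ip n w (B i))))"
    if v: "v \<in> V" for v
  proof (cases "1 \<le> ip n L v")
    case True then show ?thesis by simp
  next
    case False
    then have "ip n L v = 0" using Lpos[OF v] by simp
    then have "(\<Sum>i<n. uq i * vq v i) = 0" using ipL[of v] d by simp
    then have "vq v \<in> F" using Fdef vV[OF v] by simp
    then obtain l where lnn: "\<forall>w\<in>B ` {..<k}. 0 \<le> l w"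
      and lv: "vq v = (\<lambda>j. \<Sum>w\<in>B ` {..<k}. l w * of_int (w j))"
      unfolding FB qcone_def by blast
    have lv': "vq v j = (\<Sum>i<k. l (B i) * of_int (B i j))" for j
      using fun_cong[OF lv, of j] by (simp add: sum.reindex[OF injB])
    have ipw: "(of_int (ip n w v) :: rat) = (\<Sum>i<k. l (B i) * of_int (ip n w (B i)))" for w
    proof -
      have "(of_int (ip n w v) :: rat) = (\<Sum>j<n. of_int (w j) * vq v j)"
        by (simp add: of_int_ip vq_def)
      also have "\<dots> = (\<Sum>j<n. of_int (w j) * (\<Sum>i<k. l (B i) * of_int (B i j)))"
        by (simp add: lv')
      also have "\<dots> = (\<Sum>i<k. l (B i) * (\<Sum>j<n. of_int (w j) * of_int (B i j)))"
        by (rule sum_swap_mult)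
      finally show ?thesis by (simp add: of_int_ip)
    qed
    have Dv: "(of_int (ip n (D i') v) :: rat) = l (B i')" if "i' < k" for i'
    proof -
      have "(of_int (ip n (D i') v) :: rat) = (\<Sum>i<k. l (B i) * (if i' = i then 1 else 0))"
        unfolding ipw using that kn DB by (intro sum.cong refl) auto
      also have "\<dots> = l (B i')" using that by (simp add: if_distrib[of "\<lambda>x. _ * x"] sum.delta cong: if_cong)
      finally show ?thesis .
    qed
    have 1: "\<forall>i<k. 0 \<le> ip n (D i) v"
    proof (intro allI impI)
      fix i assume "i < k"
      then have "(0::rat) \<le> of_int (ip n (D i) v)" using Dv lnn by simp
      then show "0 \<le> ip n (D i) v" by simp
    qed
    have 2: "ip n w v = (\<Sum>i<k. ip n (D i) v * ip n w (B i))" for w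
    proof -
      have "(of_int (ip n w v) :: rat) = (\<Sum>i<k. l (B i) * of_int (ip n w (B i)))" by (rule ipw)
      also have "\<dots> = (\<Sum>i<k. of_int (ip n (D i) v) * of_int (ip n w (B i)))"
        by (intro sum.cong refl) (simp add: Dv)
      also have "\<dots> = of_int (\<Sum>i<k. ip n (D i) v * ip n w (B i))" by simp
      finally have "(of_int (ip n w v) :: rat) = of_int (\<Sum>i<k. ip n (D i) v * ip n w (B i))" .
      then show ?thesis by (simp only: of_int_eq_iff)
    qed
    show ?thesis using 1 2 by blast
  qed
  have Bpos: "0 \<le> ip n u (B i)" if u: "u \<in> dual_monoid n V" and i: "i < k" for u i
  proof -
    obtain l where lnn: "\<forall>v\<in>V. 0 \<le> l v" and lB: "vq (B i) = (\<lambda>j. \<Sum>v\<in>V. l v * of_int (v j))"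
      using BC[OF i] unfolding qcone_def by blast
    have "(of_int (ip n u (B i)) :: rat) = (\<Sum>j<n. of_int (u j) * (\<Sum>v\<in>V. l v * of_int (v j)))"
      unfolding of_int_ip using fun_cong[OF lB] by (simp add: vq_def)
    also have "\<dots> = (\<Sum>v\<in>V. l v * (\<Sum>j<n. of_int (u j) * of_int (v j)))"
      by (rule sum_swap_mult)
    also have "\<dots> = (\<Sum>v\<in>V. l v * of_int (ip n u v))" by (simp add: of_int_ip)
    also have "\<dots> \<ge> 0" using u lnn by (intro sum_nonneg mult_nonneg_nonneg) (auto simp: dual_monoid_ip)
    finally show ?thesis by simp
  qed
  define f where "f v i = \<bar>ip n (D i) v\<bar> + \<bar>\<Sum>j<n-k. chi i j * ip n (D (k+j)) v\<bar>" for v i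
  define N where "N = nat (\<Sum>v\<in>V. \<Sum>i<n. f v i)"
  have Nl: "f v i \<le> int N" if "v \<in> V" "i < n" for v i
  proof -
    have "f v i \<le> (\<Sum>i<n. f v i)" using that by (intro member_le_sum) (auto simp: f_def)
    also have "\<dots> \<le> (\<Sum>v\<in>V. \<Sum>i<n. f v i)"
      using that finV by (intro member_le_sum sum_nonneg) (auto simp: f_def)
    also have "\<dots> \<le> int N" by (simp add: N_def)
    finally show ?thesis .
  qed
  interpret tsetup n k V B D L N chi
  proof
    show "k \<le> n" by fact
    show "V \<subseteq> lat n" by fact
    show "\<And>i. i < n \<Longrightarrow> B i \<in> lat n" by (rule Blat)
    show "\<And>i. i < n \<Longrightarrow> D i \<in> lat n" using Dlat by blast
    show "L \<in> lat n" by fact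
    show "\<And>i j. i < n \<Longrightarrow> j < n \<Longrightarrow> ip n (D i) (B j) = (if i = j then 1 else 0)" using DB by blast
    show "\<And>u. u \<in> lat n \<Longrightarrow> u = (\<lambda>l. \<Sum>j<n. ip n u (B j) * D j l)" using exp by blast
    show "\<And>i. i < k \<Longrightarrow> ip n L (B i) = 0" by (rule LB)
    show "\<And>v. v \<in> V \<Longrightarrow> 1 \<le> ip n L v \<or>
      ((\<forall>i<k. 0 \<le> ip n (D i) v) \<and> (\<forall>w. ip n w v = (\<Sum>i<k. ip n (D i) v * ip n w (B i))))" by (rule Vc)
    show "\<And>u i. u \<in> dual_monoid n V \<Longrightarrow> i < k \<Longrightarrow> 0 \<le> ip n u (B i)" by (rule Bpos)
    show "\<And>v i. v \<in> V \<Longrightarrow> i < n \<Longrightarrow>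
      \<bar>ip n (D i) v\<bar> + \<bar>\<Sum>j<n-k. chi i j * ip n (D (k+j)) v\<bar> \<le> int N"
      using Nl unfolding f_def by blast
  qed
  show ?thesis by (rule locale_main)
qed

end
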